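(* Let $S=(P,L)$ be a slim dense near hexagon with $|P|\in\{759,729,891,567,405\}$, let $t+1$ be the number of lines through each point, and let $(R,\psi)$ be a non-abelian representation of $S$ with $\psi(x)=\langle r_x\rangle$. Fix $a\in P$ and $b\in\Gamma_3(a)$. Let $\ell_1,\dots,\ell_{t+1}$ be the lines through $a$, let $x_i$ be the point of $\ell_i$ with $d(b,x_i)=2$, and let $A=\{x_i:1\leq i\leq t+1\}$. For $X\subseteq A$ put $T_X=\{r_x:x\in X\}$, $M_X=\langle T_X\rangle$ and $M=\langle r_b\rangle M_X$. Suppose $X\subseteq A$ satisfies (i) $M_X\cap Z(R)=\{1\}$ and (ii) $T_X$ is linearly independent (as a subset of the elementary abelian $2$-group $M_X$, viewed as an $\mathbb{F}_2$-vector space, with $|T_X|=|X|$). Then $|M|=2^{|X|+1}$ and $M\cap Z(R)=\{1\}$. In particular, $|R|\geq 2^{2|X|+3}$.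
   Context: A slim partial linear space has exactly $3$ points per line (two distinct points on at most one line). $d$ is distance in the collinearity graph, $\Gamma_3(a)$ the set of points at distance $3$ from $a$. A near hexagon is a connected partial linear space of diameter $3$ with no point collinear with all others such that every point has a unique nearest point on every line. A quad is a convex subset of diameter $2$ in which no point is collinear with all others; the near hexagon is dense if any two points at distance $2$ lie in a quad; in a dense near hexagon every point lies on the same number $t+1$ of lines. A representation $(R,\psi)$ of $S$ is a group $R$ with a map $\psi$ assigning to each point $x$ a subgroup $\psi(x)=\langle r_x\rangle$ of order $2$, such that $R$ is generated by the $r_x$ and, for every line $\{x,y,z\}$, $\{1,r_x,r_y,r_z\}$ is a Klein four subgroup; it is non-abelian if $R$ is. (For such representations, $r_x$ and $r_y$ commute whenever $d(x,y)\leq 2$, so $M_X$ and $M$ are elementary abelian.) *)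

theory Defs
  imports "HOL-Algebra.Generated_Groups" "HOL-Algebra.Coset"
begin

definition slim_pls :: "'p set \<Rightarrow> 'p set set \<Rightarrow> bool" where
  "slim_pls P L \<longleftrightarrow> (\<forall>l\<in>L. l \<subseteq> P \<and> card l = 3) \<and>
     (\<forall>x y l m. x \<noteq> y \<and> l \<in> L \<and> m \<in> L \<and> x \<in> l \<and> y \<in> l \<and> x \<in> m \<and> y \<in> m \<longrightarrow> l = m)"

definition collinear :: "'p set set \<Rightarrow> 'p \<Rightarrow> 'p \<Rightarrow> bool" where
  "collinear L x y \<longleftrightarrow> x \<noteq> y \<and> (\<exists>l\<in>L. x \<in> l \<and> y \<in> l)"

definition adj_rel :: "'p set set \<Rightarrow> ('p \<times> 'p) set" where
  "adj_rel L = {(x, y). collinear L x y}"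

definition gdist :: "'p set set \<Rightarrow> 'p \<Rightarrow> 'p \<Rightarrow> nat" where
  "gdist L x y = (LEAST n. (x, y) \<in> adj_rel L ^^ n)"

definition near_hexagon :: "'p set \<Rightarrow> 'p set set \<Rightarrow> bool" where
  "near_hexagon P L \<longleftrightarrow>
     slim_pls P L \<and>
     (\<forall>x\<in>P. \<forall>y\<in>P. \<exists>n. (x, y) \<in> adj_rel L ^^ n) \<and>
     (\<forall>x\<in>P. \<forall>y\<in>P. gdist L x y \<le> 3) \<and> (\<exists>x\<in>P. \<exists>y\<in>P. gdist L x y = 3) \<and>
     (\<forall>x\<in>P. \<exists>y\<in>P. y \<noteq> x \<and> \<not> collinear L x y) \<and>
     (\<forall>x\<in>P. \<forall>l\<in>L. \<exists>!y. y \<in> l \<and> (\<forall>z\<in>l. z \<noteq> y \<longrightarrow> gdist L x y < gdist L x z))"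

definition convex_sub :: "'p set \<Rightarrow> 'p set set \<Rightarrow> 'p set \<Rightarrow> bool" where
  "convex_sub P L Q \<longleftrightarrow> Q \<subseteq> P \<and>
     (\<forall>l\<in>L. (\<exists>x y. x \<noteq> y \<and> x \<in> l \<inter> Q \<and> y \<in> l \<inter> Q) \<longrightarrow> l \<subseteq> Q) \<and>
     (\<forall>x\<in>Q. \<forall>y\<in>Q. \<forall>z\<in>P. gdist L x z + gdist L z y = gdist L x y \<longrightarrow> z \<in> Q)"

definition quad :: "'p set \<Rightarrow> 'p set set \<Rightarrow> 'p set \<Rightarrow> bool" where
  "quad P L Q \<longleftrightarrow> convex_sub P L Q \<and>
     (\<forall>x\<in>Q. \<forall>y\<in>Q. gdist L x y \<le> 2) \<and> (\<exists>x\<in>Q. \<exists>y\<in>Q. gdist L x y = 2) \<and>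
     (\<forall>x\<in>Q. \<exists>y\<in>Q. y \<noteq> x \<and> \<not> collinear L x y)"

definition dense_near_hexagon :: "'p set \<Rightarrow> 'p set set \<Rightarrow> bool" where
  "dense_near_hexagon P L \<longleftrightarrow> near_hexagon P L \<and>
     (\<forall>x\<in>P. \<forall>y\<in>P. gdist L x y = 2 \<longrightarrow> (\<exists>Q. quad P L Q \<and> x \<in> Q \<and> y \<in> Q))"

definition klein_four :: "('g, 'm) monoid_scheme \<Rightarrow> 'g set \<Rightarrow> bool" where
  "klein_four R K \<longleftrightarrow> subgroup K R \<and> card K = 4 \<and> (\<forall>k\<in>K. k \<otimes>\<^bsub>R\<^esub> k = \<one>\<^bsub>R\<^esub>)"

text \<open>\<open>r x\<close> is the generator of \<open>\<psi>(x)\<close>, a subgroup of order 2.\<close>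
definition representation :: "'p set \<Rightarrow> 'p set set \<Rightarrow> ('g, 'm) monoid_scheme \<Rightarrow> ('p \<Rightarrow> 'g) \<Rightarrow> bool" where
  "representation P L R r \<longleftrightarrow> group R \<and>
     (\<forall>x\<in>P. r x \<in> carrier R \<and> r x \<noteq> \<one>\<^bsub>R\<^esub> \<and> r x \<otimes>\<^bsub>R\<^esub> r x = \<one>\<^bsub>R\<^esub>) \<and>
     carrier R = generate R (r ` P) \<and>
     (\<forall>l\<in>L. \<forall>x y z. l = {x, y, z} \<longrightarrow> klein_four R {\<one>\<^bsub>R\<^esub>, r x, r y, r z})"

definition group_center :: "('g, 'm) monoid_scheme \<Rightarrow> 'g set" where
  "group_center R = {z \<in> carrier R. \<forall>g\<in>carrier R. z \<otimes>\<^bsub>R\<^esub> g = g \<otimes>\<^bsub>R\<^esub> z}"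

text \<open>Linear independence of a subset T of an elementary abelian 2-subgroup, as an F2-vector space:
  no element lies in the span (generated subgroup) of the others.\<close>
definition F2_independent :: "('g, 'm) monoid_scheme \<Rightarrow> 'g set \<Rightarrow> bool" where
  "F2_independent R T \<longleftrightarrow> (\<forall>t\<in>T. t \<notin> generate R (T - {t}))"

end

theory Submission
  imports Defs
begin

lemma relpow_sym_adj: "(x, y) \<in> adj_rel L ^^ n \<Longrightarrow> (y, x) \<in> adj_rel L ^^ n"
proof (induction n arbitrary: y)
  case 0
  then show ?case by simp
next
  case (Suc n)
  then obtain z where "(x, z) \<in> adj_rel L ^^ n" "(z, y) \<in> adj_rel L" by auto
  then have "(z, x) \<in> adj_rel L ^^ n" "(y, z) \<in> adj_rel L" using Suc
    by (auto simp: adj_rel_def collinear_def)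
  then show ?case by (meson relpow_Suc_I2)
qed

locale nh =
  fixes P :: "'p set" and L :: "'p set set"
  assumes dnh: "dense_near_hexagon P L"
begin

abbreviation d where "d \<equiv> gdist L"
abbreviation col where "col \<equiv> collinear L"

lemma nhex: "near_hexagon P L" using dnh by (simp add: dense_near_hexagon_def)
lemma slim: "slim_pls P L" using nhex by (simp add: near_hexagon_def)
lemma line_sub: "l \<in> L \<Longrightarrow> l \<subseteq> P" using slim by (simp add: slim_pls_def)
lemma line_card: "l \<in> L \<Longrightarrow> card l = 3" using slim by (simp add: slim_pls_def)
lemma line_uniq: "x \<noteq> y \<Longrightarrow> l \<in> L \<Longrightarrow> m \<in> L \<Longrightarrow> x \<in> l \<Longrightarrow> y \<in> l \<Longrightarrow> x \<in> m \<Longrightarrow> y \<in> m \<Longrightarrow> l = m"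
  using slim unfolding slim_pls_def by blast
lemma conn: "x \<in> P \<Longrightarrow> y \<in> P \<Longrightarrow> \<exists>n. (x, y) \<in> adj_rel L ^^ n"
  using nhex by (simp add: near_hexagon_def)
lemma d_le3: "x \<in> P \<Longrightarrow> y \<in> P \<Longrightarrow> d x y \<le> 3"
  using nhex by (simp add: near_hexagon_def)
lemma ex3: "\<exists>x\<in>P. \<exists>y\<in>P. d x y = 3"
  using nhex by (simp add: near_hexagon_def)
lemma np: "x \<in> P \<Longrightarrow> l \<in> L \<Longrightarrow> \<exists>!y. y \<in> l \<and> (\<forall>z\<in>l. z \<noteq> y \<longrightarrow> d x y < d x z)"
  using nhex by (simp add: near_hexagon_def)
lemma noncol_ex: "x \<in> P \<Longrightarrow> \<exists>y\<in>P. y \<noteq> x \<and> \<not> col x y"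
  using nhex by (simp add: near_hexagon_def)
lemma dense: "x \<in> P \<Longrightarrow> y \<in> P \<Longrightarrow> d x y = 2 \<Longrightarrow> \<exists>Q. quad P L Q \<and> x \<in> Q \<and> y \<in> Q"
  using dnh by (simp add: dense_near_hexagon_def)

lemma col_P: "col x y \<Longrightarrow> x \<in> P \<and> y \<in> P"
  unfolding collinear_def using line_sub by blast
lemma col_sym: "col x y \<Longrightarrow> col y x"
  unfolding collinear_def by blast
lemma col_neq: "col x y \<Longrightarrow> x \<noteq> y"
  unfolding collinear_def by blast
lemma col_line: "col x y \<Longrightarrow> \<exists>l\<in>L. x \<in> l \<and> y \<in> l"
  unfolding collinear_def by blast
lemma on_line_col: "l \<in> L \<Longrightarrow> x \<in> l \<Longrightarrow> y \<in> l \<Longrightarrow> x \<noteq> y \<Longrightarrow> col x y"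
  unfolding collinear_def by blast

lemma line3: "l \<in> L \<Longrightarrow> \<exists>x y z. l = {x,y,z} \<and> x \<noteq> y \<and> y \<noteq> z \<and> x \<noteq> z"
  using line_card card_3_iff by metis

lemma third: assumes "col x y"
  shows "\<exists>z. {x,y,z} \<in> L \<and> z \<noteq> x \<and> z \<noteq> y"
proof -
  obtain l where l: "l \<in> L" "x \<in> l" "y \<in> l" using col_line assms by blast
  obtain a b c where abc: "l = {a,b,c}" "a \<noteq> b" "b \<noteq> c" "a \<noteq> c" using line3 l by blast
  have "x \<noteq> y" using col_neq assms .
  have fin: "finite l" "card l = 3" using l abc line_card by auto
  have "card (l - {x,y}) = 1" using fin l \<open>x \<noteq> y\<close> by (simp add: card_Diff_subset)
  then obtain z where z: "l - {x,y} = {z}" using card_1_singletonE by blast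
  then have zz: "z \<in> l" "z \<noteq> x" "z \<noteq> y" by auto
  have "{x,y,z} \<subseteq> l" using zz l by auto
  moreover have "card {x,y,z} = 3" using zz \<open>x \<noteq> y\<close> by simp
  ultimately have "{x,y,z} = l" using fin by (metis card_subset_eq)
  then show ?thesis using zz l by auto
qed

lemma relpow_d: "x \<in> P \<Longrightarrow> y \<in> P \<Longrightarrow> (x, y) \<in> adj_rel L ^^ d x y"
  unfolding gdist_def using conn by (meson LeastI)
lemma d_le: "(x, y) \<in> adj_rel L ^^ n \<Longrightarrow> d x y \<le> n"
  unfolding gdist_def by (rule Least_le)
lemma d_refl[simp]: "d x x = 0"
  using d_le[of x x 0] by simp
lemma d_eq0: "x \<in> P \<Longrightarrow> y \<in> P \<Longrightarrow> d x y = 0 \<longleftrightarrow> x = y"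
  using relpow_d[of x y] by auto
lemma d_sym: "d x y = d y x"
proof -
  have "(\<lambda>n. (x,y) \<in> adj_rel L ^^ n) = (\<lambda>n. (y,x) \<in> adj_rel L ^^ n)"
    by (rule ext) (meson relpow_sym_adj)
  then show ?thesis unfolding gdist_def by simp
qed
lemma d_1: "x \<in> P \<Longrightarrow> y \<in> P \<Longrightarrow> d x y = 1 \<longleftrightarrow> col x y"
proof
  assume "x \<in> P" "y \<in> P" "d x y = 1"
  then show "col x y" using relpow_d[of x y] by (auto simp: adj_rel_def)
next
  assume "col x y"
  then have "(x, y) \<in> adj_rel L ^^ 1" by (auto simp: adj_rel_def)
  then have "d x y \<le> 1" by (rule d_le)
  moreover have "d x y \<noteq> 0" using \<open>col x y\<close> col_neq d_eq0 col_P by metis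
  ultimately show "d x y = 1" by simp
qed
lemma d_col: "col x y \<Longrightarrow> d x y = 1"
  using d_1 col_P by blast

lemma d_tri: "x \<in> P \<Longrightarrow> y \<in> P \<Longrightarrow> z \<in> P \<Longrightarrow> d x z \<le> d x y + d y z"
proof -
  assume a: "x \<in> P" "y \<in> P" "z \<in> P"
  have "(x, z) \<in> adj_rel L ^^ (d x y) O adj_rel L ^^ (d y z)"
    by (rule relcompI[OF relpow_d[OF a(1,2)] relpow_d[OF a(2,3)]])
  then have "(x, z) \<in> adj_rel L ^^ (d x y + d y z)" unfolding relpow_add .
  then show ?thesis by (rule d_le)
qed

lemma d_step: assumes "x \<in> P" "y \<in> P" "d x y = Suc n"
  shows "\<exists>z. col x z \<and> d z y = n"
proof -
  have "(x, y) \<in> adj_rel L ^^ Suc n" using relpow_d[OF assms(1,2)] unfolding assms(3) .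
  then obtain z where z: "(x, z) \<in> adj_rel L" "(z, y) \<in> adj_rel L ^^ n"
    by (rule relpow_Suc_E2)
  have cz: "col x z" using z(1) unfolding adj_rel_def by simp
  have "d z y \<le> n" by (rule d_le[OF z(2)])
  moreover have "d x y \<le> d x z + d z y" using col_P[OF cz] assms(2) by (intro d_tri) auto
  moreover have "d x z = 1" by (rule d_col[OF cz])
  ultimately have "d z y = n" using assms(3) by linarith
  then show ?thesis using cz by blast
qed

lemma d_colstep: "col x z \<Longrightarrow> y \<in> P \<Longrightarrow> d x y \<le> d z y + 1 \<and> d z y \<le> d x y + 1"
proof -
  assume a: "col x z" "y \<in> P"
  have "d x y \<le> d x z + d z y" "d z y \<le> d z x + d x y" using a(2) col_P[OF a(1)] by (auto intro: d_tri)
  moreover have "d x z = 1" "d z x = 1" using d_col[OF a(1)] d_col[OF col_sym[OF a(1)]] by simp_all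
  ultimately show ?thesis by linarith
qed

lemma line_dist:
  assumes "{p,q,s} \<in> L" "p \<noteq> q" "q \<noteq> s" "p \<noteq> s" "x \<in> P"
  shows "(d x q = Suc (d x p) \<and> d x s = Suc (d x p)) \<or>
         (d x p = Suc (d x q) \<and> d x s = Suc (d x q)) \<or>
         (d x p = Suc (d x s) \<and> d x q = Suc (d x s))"
proof -
  obtain y where y: "y \<in> {p,q,s}" "\<forall>z\<in>{p,q,s}. z \<noteq> y \<longrightarrow> d x y < d x z"
    using np[OF assms(5,1)] by blast
  have cpq: "col p q" "col q s" "col p s" using on_line_col assms by auto
  have b: "d p x \<le> d q x + 1" "d q x \<le> d p x + 1" "d q x \<le> d s x + 1" "d s x \<le> d q x + 1"
     "d p x \<le> d s x + 1" "d s x \<le> d p x + 1"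
    using d_colstep[OF cpq(1) assms(5)] d_colstep[OF cpq(2) assms(5)] d_colstep[OF cpq(3) assms(5)] by auto
  then have b': "d x p \<le> d x q + 1" "d x q \<le> d x p + 1" "d x q \<le> d x s + 1" "d x s \<le> d x q + 1"
     "d x p \<le> d x s + 1" "d x s \<le> d x p + 1" by (simp_all add: d_sym)
  have "y = p \<or> y = q \<or> y = s" using y(1) by blast
  then show ?thesis
  proof (elim disjE)
    assume "y = p"
    then have "d x p < d x q" "d x p < d x s" using y(2) assms(2-4) by auto
    then show ?thesis using b' by linarith
  next
    assume "y = q"
    then have "d x q < d x p" "d x q < d x s" using y(2) assms(2-4) by auto
    then show ?thesis using b' by linarith
  next
    assume "y = s"
    then have "d x s < d x p" "d x s < d x q" using y(2) assms(2-4) by auto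
    then show ?thesis using b' by linarith
  qed
qed

lemma no_tri:
  assumes "l \<in> L" "y \<in> l" "z \<in> l" "y \<noteq> z" "col x y" "col x z"
  shows "x \<in> l"
proof -
  have xP: "x \<in> P" using col_P assms by blast
  obtain w where w: "w \<in> l" "\<forall>v\<in>l. v \<noteq> w \<longrightarrow> d x w < d x v"
    using np[OF xP assms(1)] by blast
  have "d x y = 1" "d x z = 1" using d_col assms by auto
  then have "d x w < 1" using w assms(2-4) by metis
  then have "x = w" using d_eq0 xP line_sub assms(1) w(1) by blast
  then show ?thesis using w by simp
qed

end

context nh
begin

lemma col_d2: "col x c \<Longrightarrow> col c y \<Longrightarrow> x \<noteq> y \<Longrightarrow> \<not> col x y \<Longrightarrow> d x y = 2"
proof -
  assume a: "col x c" "col c y" "x \<noteq> y" "\<not> col x y"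
  have P: "x \<in> P" "y \<in> P" "c \<in> P" using col_P a by auto
  have "d x y \<le> d x c + d c y" using P by (intro d_tri) auto
  moreover have "d x c = 1" "d c y = 1" using d_col a by auto
  moreover have "d x y \<noteq> 0" using d_eq0 P a by auto
  moreover have "d x y \<noteq> 1" using d_1 P a by auto
  ultimately show ?thesis by linarith
qed

lemma d2_cn: "x \<in> P \<Longrightarrow> y \<in> P \<Longrightarrow> d x y = 2 \<Longrightarrow> \<exists>c. col x c \<and> col c y"
proof -
  assume a: "x \<in> P" "y \<in> P" "d x y = 2"
  then obtain c where c: "col x c" "d c y = 1" using d_step[of x y 1] by auto
  then have "col c y" using d_1 col_P a by blast
  then show ?thesis using c by blast
qed

lemma d2_noncol: "x \<in> P \<Longrightarrow> y \<in> P \<Longrightarrow> d x y = 2 \<Longrightarrow> \<not> col x y \<and> x \<noteq> y"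
  using d_col d_refl by force

lemma not_two: "l \<in> L \<Longrightarrow> y \<in> l \<Longrightarrow> z \<in> l \<Longrightarrow> y \<noteq> z \<Longrightarrow> x \<notin> l \<Longrightarrow> col x y \<Longrightarrow> col x z \<Longrightarrow> False"
  using no_tri by blast

lemma two_lines: "l \<in> L \<Longrightarrow> m \<in> L \<Longrightarrow> x \<in> l \<Longrightarrow> x \<in> m \<Longrightarrow> y \<in> l \<Longrightarrow> y \<in> m \<Longrightarrow> x \<noteq> y \<Longrightarrow> l = m"
  using line_uniq by blast

lemma line_P: "{p,q,s} \<in> L \<Longrightarrow> p \<in> P \<and> q \<in> P \<and> s \<in> P"
  using line_sub by blast

lemma q_sub: "quad P L Q \<Longrightarrow> Q \<subseteq> P" by (simp add: quad_def convex_sub_def)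
lemma q_line: "quad P L Q \<Longrightarrow> l \<in> L \<Longrightarrow> x \<noteq> y \<Longrightarrow> x \<in> l \<Longrightarrow> y \<in> l \<Longrightarrow> x \<in> Q \<Longrightarrow> y \<in> Q \<Longrightarrow> l \<subseteq> Q"
  unfolding quad_def convex_sub_def by blast
lemma q_geo: "quad P L Q \<Longrightarrow> x \<in> Q \<Longrightarrow> y \<in> Q \<Longrightarrow> z \<in> P \<Longrightarrow> d x z + d z y = d x y \<Longrightarrow> z \<in> Q"
  unfolding quad_def convex_sub_def by blast
lemma q_diam: "quad P L Q \<Longrightarrow> x \<in> Q \<Longrightarrow> y \<in> Q \<Longrightarrow> d x y \<le> 2"
  unfolding quad_def by blast
lemma q_noncol: "quad P L Q \<Longrightarrow> x \<in> Q \<Longrightarrow> \<exists>y\<in>Q. y \<noteq> x \<and> \<not> col x y"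
  unfolding quad_def by blast

lemma q_cn: "quad P L Q \<Longrightarrow> x \<in> Q \<Longrightarrow> y \<in> Q \<Longrightarrow> col x c \<Longrightarrow> col c y \<Longrightarrow> x \<noteq> y \<Longrightarrow> \<not> col x y \<Longrightarrow> c \<in> Q"
proof -
  assume a: "quad P L Q" "x \<in> Q" "y \<in> Q" "col x c" "col c y" "x \<noteq> y" "\<not> col x y"
  have "d x y = 2" using col_d2 a by blast
  moreover have "d x c = 1" "d c y = 1" using d_col a by auto
  ultimately show "c \<in> Q" using q_geo[OF a(1-3)] col_P a(4) by auto
qed

lemma q_line_near:
  assumes "quad P L Q" "{p,q,s} \<in> L" "p \<noteq> q" "q \<noteq> s" "p \<noteq> s" "{p,q,s} \<subseteq> Q" "z \<in> Q" "d z p = 2"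
  shows "col z q \<or> col z s"
proof -
  have zP: "z \<in> P" using assms q_sub by blast
  have "d z q \<le> 2" "d z s \<le> 2" using q_diam assms by auto
  then have "d z q = 1 \<or> d z s = 1" using line_dist[OF assms(2-5) zP] assms(8) by linarith
  then show ?thesis using d_1 zP line_P[OF assms(2)] by blast
qed

lemma cn_case1:
  assumes Q: "quad P L Q" and xy: "x \<in> Q" "y \<in> Q" "d x y = 2"
    and a: "col x a" "col a y" and lx: "{a,x,u} \<in> L" "u \<noteq> a" "u \<noteq> x"
    and y0: "y0 \<in> Q" "\<not> col a y0" "col y0 x" "y0 \<noteq> a"
  shows "\<exists>c. c \<noteq> a \<and> col x c \<and> col c y"
proof -
  have P: "x \<in> P" "y \<in> P" "a \<in> P" using col_P a by auto
  have nxy: "\<not> col x y" "x \<noteq> y" using d2_noncol P xy by auto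
  obtain w where m: "{x,y0,w} \<in> L" "w \<noteq> x" "w \<noteq> y0" using third[OF col_sym[OF y0(3)]] by blast
  have xy0: "x \<noteq> y0" using y0 col_neq by blast
  have mQ: "{x,y0,w} \<subseteq> Q" using q_line[OF Q m(1) xy0] xy y0 by auto
  have "y \<noteq> y0" using y0 a by blast
  have "y \<noteq> w" using m nxy on_line_col[OF m(1), of x y] by auto
  have "col y y0 \<or> col y w"
    using q_line_near[OF Q m(1) xy0 _ m(2)[symmetric] mQ xy(2)] xy(3) d_sym m by (metis)
  then obtain c where c: "c \<in> {x,y0,w}" "c \<noteq> x" "col y c" using m(2) \<open>y \<noteq> y0\<close> xy0 by auto
  have "col x c" using on_line_col[OF m(1)] c by auto
  moreover have "c \<noteq> a"
  proof
    assume "c = a"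
    then have "{x,y0,w} = {a,x,u}" using two_lines[OF m(1) lx(1), of x a] c col_neq a by auto
    then have "y0 \<in> {a,x,u}" by auto
    then show False using y0 lx on_line_col[OF lx(1), of a y0] by auto
  qed
  ultimately show ?thesis using c col_sym by blast
qed


lemma two_cn:
  assumes xy: "x \<in> P" "y \<in> P" "d x y = 2"
  shows "\<exists>c1 c2. c1 \<noteq> c2 \<and> col x c1 \<and> col c1 y \<and> col x c2 \<and> col c2 y"
proof -
  obtain Q where Q: "quad P L Q" "x \<in> Q" "y \<in> Q" using dense xy by blast
  obtain a where a: "col x a" "col a y" using d2_cn xy by blast
  have nxy: "\<not> col x y" "x \<noteq> y" using d2_noncol xy by auto
  have aQ: "a \<in> Q" using q_cn[OF Q(1,2,3) a nxy(2,1)] .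
  obtain u where lx: "{a,x,u} \<in> L" "u \<noteq> a" "u \<noteq> x" using third[OF col_sym[OF a(1)]] by blast
  obtain v where ly: "{a,y,v} \<in> L" "v \<noteq> a" "v \<noteq> y" using third[OF a(2)] by blast
  have ax: "a \<noteq> x" "a \<noteq> y" using a col_neq by auto
  have lxQ: "{a,x,u} \<subseteq> Q" using q_line[OF Q(1) lx(1) ax(1)] aQ Q by auto
  have lyQ: "{a,y,v} \<subseteq> Q" using q_line[OF Q(1) ly(1) ax(2)] aQ Q by auto
  obtain y0 where y0: "y0 \<in> Q" "y0 \<noteq> a" "\<not> col a y0" using q_noncol[OF Q(1) aQ] by blast
  have y0P: "y0 \<in> P" using y0 Q q_sub by blast
  have aP: "a \<in> P" using col_P a by blast
  have da: "d y0 a = 2"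
  proof -
    have "d y0 a \<le> 2" using q_diam Q y0 aQ by blast
    moreover have "d y0 a \<noteq> 0" using d_eq0 y0P aP y0 by auto
    moreover have "d y0 a \<noteq> 1" using d_1 y0P aP y0 col_sym by blast
    ultimately show ?thesis by linarith
  qed
  have c1: "col y0 x \<or> col y0 u" using q_line_near[OF Q(1) lx(1) ax(1) lx(3)[symmetric] lx(2)[symmetric] lxQ y0(1) da] .
  have c2: "col y0 y \<or> col y0 v" using q_line_near[OF Q(1) ly(1) ax(2) ly(3)[symmetric] ly(2)[symmetric] lyQ y0(1) da] .
  have "\<exists>c. c \<noteq> a \<and> col x c \<and> col c y"
  proof (cases "col y0 x")
    case True
    then show ?thesis using cn_case1[OF Q(1,2,3) xy(3) a lx y0(1,3) True y0(2)] by blast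
  next
    case nx: False
    show ?thesis
    proof (cases "col y0 y")
      case True
      have "\<exists>c. c \<noteq> a \<and> col y c \<and> col c x"
        using cn_case1[OF Q(1,3,2) _ col_sym[OF a(2)] col_sym[OF a(1)] ly y0(1,3) True y0(2)] xy(3) d_sym by metis
      then show ?thesis using col_sym by blast
    next
      case ny: False
      have yu: "col y0 u" "col y0 v" using c1 c2 nx ny by auto
      obtain p where n: "{u,y0,p} \<in> L" "p \<noteq> u" "p \<noteq> y0" using third[OF col_sym[OF yu(1)]] by blast
      have uy0: "u \<noteq> y0" using yu col_neq by blast
      have uQ: "u \<in> Q" using lxQ by auto
      have nQ: "{u,y0,p} \<subseteq> Q" using q_line[OF Q(1) n(1) uy0] uQ y0 by auto
      have yl: "y \<notin> {a,x,u}" using nxy ax on_line_col[OF lx(1), of x y] by auto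
      have ynu: "\<not> col y u"
        using not_two[OF lx(1), of a u y] yl lx(2) col_sym[OF a(2)] by auto
      have "y \<noteq> u" using yl by auto
      have cau: "col a u" using on_line_col[OF lx(1), of a u] lx(2) by auto
      have dyu: "d y u = 2" using col_d2[OF col_sym[OF a(2)] cau \<open>y \<noteq> u\<close> ynu] .
      have p1: "col y y0 \<or> col y p"
        using q_line_near[OF Q(1) n(1) uy0 n(3)[symmetric] n(2)[symmetric] nQ Q(3) dyu] .
      have cyp: "col y p" using p1 ny col_sym by blast
      have xnotn: "x \<notin> {u,y0,p}"
      proof
        assume "x \<in> {u,y0,p}"
        then have "{u,y0,p} = {a,x,u}" using two_lines[OF n(1) lx(1), of u x] lx(3) by auto
        then have "y0 \<in> {a,x,u}" by auto
        then show False using y0 lx on_line_col[OF lx(1), of a y0] nx uy0 by auto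
      qed
      have "p \<noteq> x" using xnotn by auto
      have nxp: "\<not> col x p"
        using not_two[OF n(1), of u p x] xnotn n(2) lx on_line_col[OF lx(1), of x u] col_sym by auto
      have "col p u" using on_line_col[OF n(1)] n(2) by auto
      have dxp: "d x p = 2" using col_d2[OF _ col_sym[OF \<open>col p u\<close>]] nxp \<open>p \<noteq> x\<close> on_line_col[OF lx(1), of x u] lx(3) by auto
      obtain q where k: "{y,p,q} \<in> L" "q \<noteq> y" "q \<noteq> p" using third[OF cyp] by blast
      have yp: "y \<noteq> p" using cyp col_neq by blast
      have "d x q = 1" using line_dist[OF k(1) yp k(3)[symmetric] k(2)[symmetric] xy(1)] xy(3) dxp by linarith
      then have cxq: "col x q" using d_1 xy(1) line_P[OF k(1)] by blast
      have cqy: "col q y" using on_line_col[OF k(1)] k by auto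
      have "q \<noteq> a"
      proof
        assume "q = a"
        then have "{y,p,q} = {a,y,v}" using two_lines[OF k(1) ly(1), of y a] ax by auto
        then have "p \<in> {a,y,v}" by auto
        then have "p = a \<or> p = v" using yp by auto
        then show False
        proof
          assume "p = a"
          then have "a \<in> {u,y0,p}" by auto
          then have "{u,y0,p} = {a,x,u}" using two_lines[OF n(1) lx(1), of u a] lx(2) by auto
          then show False using xnotn by auto
        next
          assume "p = v"
          have "u \<noteq> v"
          proof
            assume "u = v"
            then have "{a,x,u} = {a,y,v}" using two_lines[OF lx(1) ly(1), of a u] lx(2) by auto
            then show False using yl ax by auto
          qed
          then have "col u v" using on_line_col[OF n(1)] \<open>p = v\<close> by auto
          have "a \<in> {u,y0,p}"
            using no_tri[OF n(1), of u p a] \<open>p = v\<close> \<open>u \<noteq> v\<close> on_line_col[OF lx(1), of a u] on_line_col[OF ly(1), of a v] lx ly by auto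
          then have "{u,y0,p} = {a,x,u}" using two_lines[OF n(1) lx(1), of u a] lx(2) by auto
          then show False using xnotn by auto
        qed
      qed
      then show ?thesis using cxq cqy by blast
    qed
  qed
  then obtain c where "c \<noteq> a" "col x c" "col c y" by blast
  then show ?thesis using a by blast
qed

end

context nh
begin

lemma grid:
  assumes xy: "d x y = 2" and c: "col x c1" "col c1 y" "col x c2" "col c2 y" "c1 \<noteq> c2"
    and l1: "{x,c1,u1} \<in> L" "u1 \<noteq> x" "u1 \<noteq> c1"
    and l2: "{y,c2,v2} \<in> L" "v2 \<noteq> y" "v2 \<noteq> c2"
  shows "col u1 v2 \<and> \<not> col x v2 \<and> x \<noteq> v2"
proof -
  have P: "x \<in> P" "y \<in> P" "c1 \<in> P" "c2 \<in> P" using col_P c by auto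
  have nxy: "\<not> col x y" "x \<noteq> y" using d2_noncol P xy by auto
  have xnl: "x \<notin> {y,c2,v2}" using nxy on_line_col[OF l2(1), of x y] c(3) col_neq[OF c(3)] by auto
  have nxv: "\<not> col x v2" "x \<noteq> v2"
    using not_two[OF l2(1), of c2 v2 x] xnl c(3) l2(3) by auto
  have cv2: "col v2 c2" using on_line_col[OF l2(1)] l2 by auto
  have d1: "d v2 x = 2" using col_d2[OF cv2 col_sym[OF c(3)]] nxv col_sym by metis
  have c1nl: "c1 \<notin> {y,c2,v2}"
  proof
    assume "c1 \<in> {y,c2,v2}"
    then show False using col_neq[OF c(2)] c(5) nxv c(1) by auto
  qed
  have nc1v: "\<not> col c1 v2" "c1 \<noteq> v2"
    using not_two[OF l2(1), of y v2 c1] c1nl c(2) l2(2) by auto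
  have vy: "col v2 y" using on_line_col[OF l2(1)] l2 by auto
  have d2: "d v2 c1 = 2" using col_d2[OF vy col_sym[OF c(2)]] nc1v col_sym by metis
  have v2P: "v2 \<in> P" using line_P[OF l2(1)] by auto
  have "d v2 u1 = 1"
    using line_dist[OF l1(1) col_neq[OF c(1)] l1(3)[symmetric] l1(2)[symmetric] v2P] d1 d2 by linarith
  then have "col v2 u1" using d_1 v2P line_P[OF l1(1)] by blast
  then show ?thesis using col_sym nxv by blast
qed

lemma ninth_aux:
  assumes xy: "d x y = 2" and c: "col x c1" "col c1 y" "col x c2" "col c2 y" "c1 \<noteq> c2"
    and l1: "{x,c1,u1} \<in> L" "u1 \<noteq> x" "u1 \<noteq> c1"
    and l2: "{y,c2,v2} \<in> L" "v2 \<noteq> y" "v2 \<noteq> c2"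
    and l3: "{x,c2,u2} \<in> L" "u2 \<noteq> x" "u2 \<noteq> c2"
    and l4: "{u1,v2,z} \<in> L" "z \<noteq> u1" "z \<noteq> v2"
  shows "col z u2 \<and> z \<noteq> u2"
proof -
  have P: "x \<in> P" "y \<in> P" "c1 \<in> P" "c2 \<in> P" using col_P c by auto
  have nxy: "\<not> col x y" "x \<noteq> y" using d2_noncol P xy by auto
  have g: "col u1 v2" "\<not> col x v2" "x \<noteq> v2" using grid[OF xy c l1 l2] by auto
  have xu1: "col x u1" using on_line_col[OF l1(1)] l1 by auto
  have xnl: "x \<notin> {u1,v2,z}"
  proof
    assume "x \<in> {u1,v2,z}"
    then have "x = z" using l1(2) g by auto
    then show False using g(1) xu1 l4 \<open>x = z\<close> on_line_col[OF l4(1), of v2 z] col_sym g(2) by auto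
  qed
  have nxz: "\<not> col x z" "x \<noteq> z" using not_two[OF l4(1), of u1 z x] xnl xu1 l4(2) by auto
  have zu1: "col z u1" using on_line_col[OF l4(1)] l4 by auto
  have dzx: "d z x = 2" using col_d2[OF zu1 col_sym[OF xu1]] nxz col_sym by metis
  have c2v2: "col c2 v2" using on_line_col[OF l2(1)] l2 by auto
  have c2nl: "c2 \<notin> {u1,v2,z}"
  proof
    assume h: "c2 \<in> {u1,v2,z}"
    have "c2 \<noteq> u1"
    proof
      assume "c2 = u1"
      then have "col c1 c2" using on_line_col[OF l1(1)] c(5) by auto
      then have "y \<in> {x,c1,u1}" using no_tri[OF l1(1), of c1 c2 y] \<open>c2 = u1\<close> c col_sym by auto
      then show False using nxy col_neq[OF c(2)] on_line_col[OF l1(1), of x y] by auto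
    qed
    moreover have "c2 \<noteq> z"
    proof
      assume "c2 = z"
      then have "col c2 u1" using zu1 by simp
      then have "c2 \<in> {x,c1,u1}" using no_tri[OF l1(1), of x u1 c2] l1(2) c(3) col_sym by auto
      then show False using \<open>c2 \<noteq> u1\<close> c(5) col_neq[OF c(3)] by auto
    qed
    ultimately show False using h l2(3) by auto
  qed
  have nc2z: "\<not> col c2 z" "c2 \<noteq> z" using not_two[OF l4(1), of v2 z c2] c2nl c2v2 l4(3) by auto
  have zv2: "col z v2" using on_line_col[OF l4(1)] l4 by auto
  have dzc2: "d z c2 = 2" using col_d2[OF zv2 col_sym[OF c2v2]] nc2z col_sym by metis
  have zP: "z \<in> P" using line_P[OF l4(1)] by auto
  have "d z u2 = 1"
    using line_dist[OF l3(1) col_neq[OF c(3)] l3(3)[symmetric] l3(2)[symmetric] zP] dzx dzc2 by linarith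
  then have "col z u2" using d_1 zP line_P[OF l3(1)] by blast
  moreover have "z \<noteq> u2" using nxz on_line_col[OF l3(1), of x u2] l3 by auto
  ultimately show ?thesis by blast
qed

lemma ninth:
  assumes xy: "d x y = 2" and c: "col x c1" "col c1 y" "col x c2" "col c2 y" "c1 \<noteq> c2"
    and l1: "{x,c1,u1} \<in> L" "u1 \<noteq> x" "u1 \<noteq> c1"
    and l2: "{y,c2,v2} \<in> L" "v2 \<noteq> y" "v2 \<noteq> c2"
    and l3: "{x,c2,u2} \<in> L" "u2 \<noteq> x" "u2 \<noteq> c2"
    and l5: "{y,c1,v1} \<in> L" "v1 \<noteq> y" "v1 \<noteq> c1"
    and l4: "{u1,v2,z} \<in> L" "z \<noteq> u1" "z \<noteq> v2"
  shows "{u2,v1,z} \<in> L"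
proof -
  have P: "x \<in> P" "y \<in> P" using col_P c by auto
  have a1: "col z u2" "z \<noteq> u2" using ninth_aux[OF xy c l1 l2 l3 l4] by auto
  have l4': "{v2,u1,z} \<in> L" using l4(1) by (simp add: insert_commute)
  have a2: "col z v1" "z \<noteq> v1"
    using ninth_aux[OF _ col_sym[OF c(4)] col_sym[OF c(3)] col_sym[OF c(2)] col_sym[OF c(1)] c(5)[symmetric]
        l2 l1 l5 l4' l4(3) l4(2)] xy d_sym by auto
  have "col u2 v1" using grid[OF xy c(3,4,1,2) c(5)[symmetric] l3 l5] by auto
  then obtain w where w: "{u2,v1,w} \<in> L" "w \<noteq> u2" "w \<noteq> v1" using third by blast
  have "u2 \<noteq> v1" using col_neq[OF \<open>col u2 v1\<close>] .
  then have "z \<in> {u2,v1,w}" using no_tri[OF w(1), of u2 v1 z] a1 a2 by auto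
  then have "z = w" using a1 a2 by auto
  then show ?thesis using w by simp
qed

end

lemma (in group) lcan: "x \<in> carrier G \<Longrightarrow> y \<in> carrier G \<Longrightarrow> z \<in> carrier G \<Longrightarrow> x \<otimes> y = x \<otimes> z \<longleftrightarrow> y = z"
  by (simp add: Units_eq)

lemma (in group) grid_alg:
  assumes car: "a \<in> carrier G" "b \<in> carrier G" "c \<in> carrier G" "e \<in> carrier G"
    and ab: "a \<otimes> b = b \<otimes> a" and ac: "a \<otimes> c = c \<otimes> a" and eb: "e \<otimes> b = b \<otimes> e" and ec: "e \<otimes> c = c \<otimes> e"
    and z: "(a \<otimes> b) \<otimes> (e \<otimes> c) = (a \<otimes> c) \<otimes> (e \<otimes> b)"
    and cm: "(a \<otimes> c) \<otimes> (e \<otimes> b) = (e \<otimes> b) \<otimes> (a \<otimes> c)"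
  shows "a \<otimes> e = e \<otimes> a"
proof -
  have "a \<otimes> (b \<otimes> (e \<otimes> c)) = a \<otimes> (c \<otimes> (e \<otimes> b))" using z car by (simp add: m_assoc)
  then have "b \<otimes> (e \<otimes> c) = c \<otimes> (e \<otimes> b)" using car by (simp add: lcan)
  moreover have "b \<otimes> (e \<otimes> c) = e \<otimes> (b \<otimes> c)"
  proof -
    have "b \<otimes> (e \<otimes> c) = (b \<otimes> e) \<otimes> c" using car by (simp add: m_assoc)
    also have "\<dots> = (e \<otimes> b) \<otimes> c" using eb by simp
    finally show ?thesis using car by (simp add: m_assoc)
  qed
  moreover have "c \<otimes> (e \<otimes> b) = e \<otimes> (c \<otimes> b)"
  proof -
    have "c \<otimes> (e \<otimes> b) = (c \<otimes> e) \<otimes> b" using car by (simp add: m_assoc)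
    also have "\<dots> = (e \<otimes> c) \<otimes> b" using ec by simp
    finally show ?thesis using car by (simp add: m_assoc)
  qed
  ultimately have "e \<otimes> (b \<otimes> c) = e \<otimes> (c \<otimes> b)" by simp
  then have bc: "b \<otimes> c = c \<otimes> b" using car by (simp add: lcan)
  have "(a \<otimes> c) \<otimes> (e \<otimes> b) = ((a \<otimes> e) \<otimes> b) \<otimes> c"
  proof -
    have "(a \<otimes> c) \<otimes> (e \<otimes> b) = a \<otimes> ((c \<otimes> e) \<otimes> b)" using car by (simp add: m_assoc)
    also have "\<dots> = a \<otimes> ((e \<otimes> c) \<otimes> b)" using ec by simp
    also have "\<dots> = a \<otimes> (e \<otimes> (c \<otimes> b))" using car by (simp add: m_assoc)
    also have "\<dots> = a \<otimes> (e \<otimes> (b \<otimes> c))" using bc by simp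
    also have "\<dots> = ((a \<otimes> e) \<otimes> b) \<otimes> c" using car by (simp add: m_assoc)
    finally show ?thesis .
  qed
  moreover have "(e \<otimes> b) \<otimes> (a \<otimes> c) = ((e \<otimes> a) \<otimes> b) \<otimes> c"
  proof -
    have "(e \<otimes> b) \<otimes> (a \<otimes> c) = e \<otimes> ((b \<otimes> a) \<otimes> c)" using car by (simp add: m_assoc)
    also have "\<dots> = e \<otimes> ((a \<otimes> b) \<otimes> c)" using ab by simp
    also have "\<dots> = ((e \<otimes> a) \<otimes> b) \<otimes> c" using car by (simp add: m_assoc)
    finally show ?thesis .
  qed
  ultimately have "((a \<otimes> e) \<otimes> b) \<otimes> c = ((e \<otimes> a) \<otimes> b) \<otimes> c" using cm by simp
  then have "(a \<otimes> e) \<otimes> b = (e \<otimes> a) \<otimes> b" using car by (simp add: right_cancel)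
  then show ?thesis using car by (simp add: right_cancel)
qed

locale nhrep = nh P L for P :: "'p set" and L +
  fixes R :: "('g, 'm) monoid_scheme" and r :: "'p \<Rightarrow> 'g"
  assumes rep: "representation P L R r"
begin

lemma grp: "group R" using rep by (simp add: representation_def)

lemma r_carr: "x \<in> P \<Longrightarrow> r x \<in> carrier R" using rep unfolding representation_def by blast
lemma r_ne1: "x \<in> P \<Longrightarrow> r x \<noteq> \<one>\<^bsub>R\<^esub>" using rep unfolding representation_def by blast
lemma r_sq: "x \<in> P \<Longrightarrow> r x \<otimes>\<^bsub>R\<^esub> r x = \<one>\<^bsub>R\<^esub>" using rep unfolding representation_def by blast
lemma r_gen: "carrier R = generate R (r ` P)" using rep by (simp add: representation_def)
lemma r_inv: "x \<in> P \<Longrightarrow> inv\<^bsub>R\<^esub> (r x) = r x"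
  using group.inv_equality[OF grp r_sq r_carr r_carr] by blast

lemma line_distinct: "{x,y,z} \<in> L \<Longrightarrow> x \<noteq> y \<and> y \<noteq> z \<and> x \<noteq> z"
proof -
  assume "{x,y,z} \<in> L"
  then have c: "card {x,y,z} = 3" using line_card by blast
  show ?thesis
  proof (intro conjI notI)
    assume "x = y" then show False using c by (simp add: card_insert_if split: if_splits)
  next
    assume "y = z" then show False using c by (simp add: card_insert_if split: if_splits)
  next
    assume "x = z" then show False using c by (simp add: card_insert_if split: if_splits)
  qed
qed

lemma line_prod:
  assumes l: "{x,y,z} \<in> L" "x \<noteq> y" "y \<noteq> z" "x \<noteq> z"
  shows "r x \<otimes>\<^bsub>R\<^esub> r y = r z"
proof -
  interpret G: group R by (rule grp)
  have P: "x \<in> P" "y \<in> P" "z \<in> P" using line_P l by auto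
  have K: "klein_four R {\<one>\<^bsub>R\<^esub>, r x, r y, r z}" using rep l unfolding representation_def by blast
  then have sg: "subgroup {\<one>\<^bsub>R\<^esub>, r x, r y, r z} R" and c4: "card {\<one>\<^bsub>R\<^esub>, r x, r y, r z} = 4"
    by (auto simp: klein_four_def)
  have "card (set [\<one>\<^bsub>R\<^esub>, r x, r y, r z]) = length [\<one>\<^bsub>R\<^esub>, r x, r y, r z]" using c4 by simp
  then have "distinct [\<one>\<^bsub>R\<^esub>, r x, r y, r z]" by (rule card_distinct)
  then have ds: "r x \<noteq> r y" "r x \<noteq> r z" "r y \<noteq> r z" by auto
  have mem: "r x \<otimes>\<^bsub>R\<^esub> r y \<in> {\<one>\<^bsub>R\<^esub>, r x, r y, r z}"
    using subgroup.m_closed[OF sg] by blast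
  have "r x \<otimes>\<^bsub>R\<^esub> r y \<noteq> \<one>\<^bsub>R\<^esub>"
  proof
    assume "r x \<otimes>\<^bsub>R\<^esub> r y = \<one>\<^bsub>R\<^esub>"
    then have "r x \<otimes>\<^bsub>R\<^esub> r y = r x \<otimes>\<^bsub>R\<^esub> r x" using r_sq P by simp
    then have "r y = r x" using G.lcan r_carr P by blast
    then show False using ds by simp
  qed
  moreover have "r x \<otimes>\<^bsub>R\<^esub> r y \<noteq> r x"
  proof
    assume "r x \<otimes>\<^bsub>R\<^esub> r y = r x"
    then have "r y = \<one>\<^bsub>R\<^esub>" using r_carr P by simp
    then show False using r_ne1 P by simp
  qed
  moreover have "r x \<otimes>\<^bsub>R\<^esub> r y \<noteq> r y"
  proof
    assume "r x \<otimes>\<^bsub>R\<^esub> r y = r y"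
    then have "r x = \<one>\<^bsub>R\<^esub>" using r_carr P by simp
    then show False using r_ne1 P by simp
  qed
  ultimately show ?thesis using mem by blast
qed

lemma col_comm: assumes "col x y" shows "r x \<otimes>\<^bsub>R\<^esub> r y = r y \<otimes>\<^bsub>R\<^esub> r x"
proof -
  obtain z where z: "{x,y,z} \<in> L" "z \<noteq> x" "z \<noteq> y" using third assms by blast
  have "x \<noteq> y" using col_neq assms .
  have z': "{y,x,z} \<in> L" using z(1) by (simp add: insert_commute)
  show ?thesis using line_prod[OF z(1) \<open>x \<noteq> y\<close>] line_prod[OF z' ] z \<open>x \<noteq> y\<close> by auto
qed

lemma col_prod: assumes "{x,y,z} \<in> L" "z \<noteq> x" "z \<noteq> y" "x \<noteq> y"
  shows "r z = r x \<otimes>\<^bsub>R\<^esub> r y"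
  using line_prod assms by metis

lemma comm_d2: assumes "x \<in> P" "y \<in> P" "d x y = 2" shows "r x \<otimes>\<^bsub>R\<^esub> r y = r y \<otimes>\<^bsub>R\<^esub> r x"
proof -
  obtain c1 c2 where c: "c1 \<noteq> c2" "col x c1" "col c1 y" "col x c2" "col c2 y" using two_cn assms by blast
  obtain u1 where l1: "{x,c1,u1} \<in> L" "u1 \<noteq> x" "u1 \<noteq> c1" using third c by blast
  obtain u2 where l3: "{x,c2,u2} \<in> L" "u2 \<noteq> x" "u2 \<noteq> c2" using third c by blast
  obtain v1 where l5: "{y,c1,v1} \<in> L" "v1 \<noteq> y" "v1 \<noteq> c1" using third c col_sym by blast
  obtain v2 where l2: "{y,c2,v2} \<in> L" "v2 \<noteq> y" "v2 \<noteq> c2" using third c col_sym by blast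
  have cc: "col x c1" "col c1 y" "col x c2" "col c2 y" "c1 \<noteq> c2" using c by auto
  have "col u1 v2" using grid[OF assms(3) cc l1 l2] by auto
  then obtain z where l4: "{u1,v2,z} \<in> L" "z \<noteq> u1" "z \<noteq> v2" using third by blast
  have l6: "{u2,v1,z} \<in> L" using ninth[OF assms(3) cc l1 l2 l3 l5 l4] .
  have "col u2 v1" using grid[OF assms(3) cc(3,4,1,2) cc(5)[symmetric] l3 l5] by auto
  have n: "x \<noteq> c1" "x \<noteq> c2" "y \<noteq> c1" "y \<noteq> c2" "u1 \<noteq> v2" "u2 \<noteq> v1" using c col_neq \<open>col u1 v2\<close> \<open>col u2 v1\<close> by auto
  have e1: "r u1 = r x \<otimes>\<^bsub>R\<^esub> r c1" using col_prod[OF l1] n by auto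
  have e2: "r v2 = r y \<otimes>\<^bsub>R\<^esub> r c2" using col_prod[OF l2] n by auto
  have e3: "r u2 = r x \<otimes>\<^bsub>R\<^esub> r c2" using col_prod[OF l3] n by auto
  have e4: "r v1 = r y \<otimes>\<^bsub>R\<^esub> r c1" using col_prod[OF l5] n by auto
  have z1: "r z = r u1 \<otimes>\<^bsub>R\<^esub> r v2" using col_prod[OF l4] n by auto
  have z2: "r z = r u2 \<otimes>\<^bsub>R\<^esub> r v1" using line_prod[OF l6] line_distinct[OF l6] by auto
  have cm: "r u2 \<otimes>\<^bsub>R\<^esub> r v1 = r v1 \<otimes>\<^bsub>R\<^esub> r u2" using col_comm[OF \<open>col u2 v1\<close>] .
  have car: "r x \<in> carrier R" "r c1 \<in> carrier R" "r c2 \<in> carrier R" "r y \<in> carrier R"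
    using r_carr col_P c by auto
  show ?thesis
    using group.grid_alg[OF grp car col_comm[OF c(2)] col_comm[OF c(4)] col_comm[OF col_sym[OF c(3)]]
        col_comm[OF col_sym[OF c(5)]]] z1 z2 e1 e2 e3 e4 cm by simp
qed

lemma comm_le2: assumes "x \<in> P" "y \<in> P" "d x y \<le> 2" shows "r x \<otimes>\<^bsub>R\<^esub> r y = r y \<otimes>\<^bsub>R\<^esub> r x"
proof -
  consider "d x y = 0" | "d x y = 1" | "d x y = 2" using assms(3) by linarith
  then show ?thesis
  proof cases
    case 1 then show ?thesis using d_eq0 assms by simp
  next
    case 2 then show ?thesis using d_1 assms col_comm by blast
  next
    case 3 then show ?thesis using comm_d2 assms by blast
  qed
qed

end

lemma (in group) step_alg:
  assumes car: "a \<in> carrier G" "b \<in> carrier G" "w \<in> carrier G"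
    and ww: "w \<otimes> w = \<one>" and aw: "a \<otimes> w = w \<otimes> a" and bw: "b \<otimes> w = w \<otimes> b"
  shows "a \<otimes> (b \<otimes> w) \<otimes> a \<otimes> (b \<otimes> w) = a \<otimes> b \<otimes> a \<otimes> b"
proof -
  have "a \<otimes> (b \<otimes> w) \<otimes> a \<otimes> (b \<otimes> w) = a \<otimes> (b \<otimes> ((w \<otimes> a) \<otimes> (b \<otimes> w)))" using car by (simp add: m_assoc)
  also have "\<dots> = a \<otimes> (b \<otimes> ((a \<otimes> w) \<otimes> (b \<otimes> w)))" using aw by simp
  also have "\<dots> = a \<otimes> (b \<otimes> (a \<otimes> ((w \<otimes> b) \<otimes> w)))" using car by (simp add: m_assoc)
  also have "\<dots> = a \<otimes> (b \<otimes> (a \<otimes> ((b \<otimes> w) \<otimes> w)))" using bw by simp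
  also have "\<dots> = a \<otimes> (b \<otimes> (a \<otimes> (b \<otimes> (w \<otimes> w))))" using car by (simp add: m_assoc)
  also have "\<dots> = a \<otimes> b \<otimes> a \<otimes> b" using car ww by (simp add: m_assoc)
  finally show ?thesis .
qed

context nh
begin
lemma d3_nb: "x \<in> P \<Longrightarrow> d x y = 3 \<Longrightarrow> col y z \<Longrightarrow> d x z \<ge> 2 \<and> d x z \<le> 3"
  using d_colstep[of y z x] d_sym d_le3 col_P by (metis add_le_cancel_right numeral_plus_one one_add_one semiring_norm(5))

end

context nhrep
begin

definition com :: "'p \<Rightarrow> 'p \<Rightarrow> 'g" where
  "com x y = r x \<otimes>\<^bsub>R\<^esub> r y \<otimes>\<^bsub>R\<^esub> r x \<otimes>\<^bsub>R\<^esub> r y"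

lemma line_step:
  assumes l: "{y,z,w} \<in> L" and x: "x \<in> P" and c: "r x \<otimes>\<^bsub>R\<^esub> r w = r w \<otimes>\<^bsub>R\<^esub> r x"
  shows "com x z = com x y"
proof -
  have ds: "y \<noteq> z" "z \<noteq> w" "y \<noteq> w" using line_distinct[OF l] by auto
  have P: "y \<in> P" "z \<in> P" "w \<in> P" using line_P l by auto
  have "r z = r y \<otimes>\<^bsub>R\<^esub> r w"
    using line_prod[of y w z] l ds by (simp add: insert_commute)
  moreover have "r y \<otimes>\<^bsub>R\<^esub> r w = r w \<otimes>\<^bsub>R\<^esub> r y" using col_comm on_line_col[OF l] ds by auto
  ultimately show ?thesis unfolding com_def
    using group.step_alg[OF grp r_carr[OF x] r_carr[OF P(1)] r_carr[OF P(3)] r_sq[OF P(3)] c] by simp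
qed


lemma F1:
  assumes x: "x \<in> P" and y: "d x y = 3" and z: "d x z = 3" and c: "col y z"
  shows "com x z = com x y"
proof -
  obtain w where l: "{y,z,w} \<in> L" "w \<noteq> y" "w \<noteq> z" using third c by blast
  have ds: "y \<noteq> z" using col_neq c .
  have "d x w = 2" using line_dist[OF l(1) ds l(3)[symmetric] l(2)[symmetric] x] y z by linarith
  then have "r x \<otimes>\<^bsub>R\<^esub> r w = r w \<otimes>\<^bsub>R\<^esub> r x" using comm_le2 x line_P[OF l(1)] by auto
  then show ?thesis using line_step[OF l(1) x] by blast
qed

lemma F2:
  assumes x: "x \<in> P" and y: "d x y = 3" and z: "d x z = 3" and yz: "d y z = 2" and yP: "y \<in> P" and zP: "z \<in> P"
  shows "com x z = com x y"
proof -
  obtain c1 c2 where c: "c1 \<noteq> c2" "col y c1" "col c1 z" "col y c2" "col c2 z" using two_cn yz yP zP by blast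
  have dc: "d x c1 \<ge> 2" "d x c2 \<ge> 2" "d x c1 \<le> 3" "d x c2 \<le> 3" using d3_nb[OF x y] c by auto
  show ?thesis
  proof (cases "d x c1 = 3")
    case True
    then show ?thesis using F1[OF x y True c(2)] F1[OF x True z c(3)] by simp
  next
    case f1: False
    show ?thesis
    proof (cases "d x c2 = 3")
      case True
      then show ?thesis using F1[OF x y True c(4)] F1[OF x True z c(5)] by simp
    next
      case False
      then have d2: "d x c1 = 2" "d x c2 = 2" using dc f1 by auto
      obtain u1 where l1: "{y,c1,u1} \<in> L" "u1 \<noteq> y" "u1 \<noteq> c1" using third c by blast
      obtain v2 where l2: "{z,c2,v2} \<in> L" "v2 \<noteq> z" "v2 \<noteq> c2" using third c col_sym by blast
      have g: "col u1 v2" using grid[OF yz c(2,3,4,5,1) l1 l2] by auto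
      have "d x u1 = 3" using line_dist[OF l1(1) col_neq[OF c(2)] l1(3)[symmetric] l1(2)[symmetric] x] y d2 by linarith
      moreover have "d x v2 = 3" using line_dist[OF l2(1) col_neq[OF col_sym[OF c(5)]] l2(3)[symmetric] l2(2)[symmetric] x] z d2 by linarith
      moreover have "col y u1" "col v2 z" using on_line_col[OF l1(1)] on_line_col[OF l2(1)] l1 l2 by auto
      ultimately show ?thesis using F1[OF x y _ \<open>col y u1\<close>] F1[OF x _ _ g] F1[OF x _ z \<open>col v2 z\<close>] by simp
    qed
  qed
qed

lemma F3:
  assumes x: "x \<in> P" and y: "d x y = 3" and z: "d x z = 3" and yz: "d y z = 3" and yP: "y \<in> P" and zP: "z \<in> P"
  shows "com x z = com x y"
proof -
  obtain u where u: "col z u" "d u y = 2" using d_step[of z y 2] yz d_sym zP yP by auto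
  have uP: "u \<in> P" using col_P u by blast
  have du: "d x u \<ge> 2" "d x u \<le> 3" using d3_nb[OF x z u(1)] by auto
  show ?thesis
  proof (cases "d x u = 3")
    case True
    then show ?thesis using F2[OF x y True _ yP uP] F1[OF x True z col_sym[OF u(1)]] u(2) d_sym by metis
  next
    case False
    then have du2: "d x u = 2" using du by auto
    obtain c1 c2 where c: "c1 \<noteq> c2" "col u c1" "col c1 y" "col u c2" "col c2 y" using two_cn u(2) uP yP by blast
    have dc: "d x c1 \<ge> 2" "d x c2 \<ge> 2" "d x c1 \<le> 3" "d x c2 \<le> 3" using d3_nb[OF x y] c col_sym by blast+
    have gen: "com x z = com x y" if cy: "col c y" and cu: "col u c" and dc3: "d x c = 3" for c
    proof -
      have cP: "c \<in> P" using col_P cy by blast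
      have "d c z \<le> d c u + d u z" using cP uP zP by (intro d_tri) auto
      moreover have "d c u = 1" "d u z = 1" using d_col cu u(1) col_sym by auto
      moreover have "d y z \<le> d y c + d c z" using cP yP zP by (intro d_tri) auto
      moreover have "d y c = 1" using d_col cy col_sym by blast
      ultimately have "d c z = 2" using yz by linarith
      then show ?thesis using F1[OF x y dc3 col_sym[OF cy]] F2[OF x dc3 z _ cP zP] by simp
    qed
    show ?thesis
    proof (cases "d x c1 = 3")
      case True
      then show ?thesis using gen c by blast
    next
      case f1: False
      show ?thesis
      proof (cases "d x c2 = 3")
        case True
        then show ?thesis using gen c by blast
      next
        case False
        then have d2: "d x c1 = 2" "d x c2 = 2" using dc f1 by auto
        obtain c1' where l1: "{u,c1,c1'} \<in> L" "c1' \<noteq> u" "c1' \<noteq> c1" using third c by blast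
        obtain v2 where l2: "{y,c2,v2} \<in> L" "v2 \<noteq> y" "v2 \<noteq> c2" using third c col_sym by blast
        have g: "col c1' v2" using grid[OF u(2) c(2,3,4,5,1) l1 l2] by auto
        have "d x c1' = 1" using line_dist[OF l1(1) col_neq[OF c(2)] l1(3)[symmetric] l1(2)[symmetric] x] du2 d2 by linarith
        moreover have "d x v2 = 3"
          using line_dist[OF l2(1) col_neq[OF col_sym[OF c(5)]] l2(3)[symmetric] l2(2)[symmetric] x] y d2 by linarith
        moreover have "d x v2 \<le> d x c1' + d c1' v2" using x col_P[OF g] by (intro d_tri) auto
        moreover have "d c1' v2 = 1" using d_col g by blast
        ultimately show ?thesis by linarith
      qed
    qed
  qed
qed

lemma gamma3_const:
  assumes x: "x \<in> P" and y: "d x y = 3" and z: "d x z = 3" and yP: "y \<in> P" and zP: "z \<in> P"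
  shows "com x z = com x y"
proof -
  have "d y z \<le> 3" using d_le3 yP zP by blast
  then consider "d y z = 0" | "d y z = 1" | "d y z = 2" | "d y z = 3" by linarith
  then show ?thesis
  proof cases
    case 1 then show ?thesis using d_eq0 yP zP by simp
  next
    case 2 then show ?thesis using F1[OF x y z] d_1 yP zP by blast
  next
    case 3 then show ?thesis using F2[OF x y z _ yP zP] by blast
  next
    case 4 then show ?thesis using F3[OF x y z _ yP zP] by blast
  qed
qed

end

context nh
begin

lemma opp_prop:
  assumes pp: "col p p'" and q: "q \<in> P" "d p' q = 3"
  shows "\<exists>q\<in>P. d p q = 3"
proof (rule ccontr)
  assume "\<not> (\<exists>q\<in>P. d p q = 3)"
  then have nD: "\<And>z. z \<in> P \<Longrightarrow> d p z \<le> 2" using d_le3 col_P pp by (metis le_antisym not_less_eq_eq numeral_2_eq_2 numeral_3_eq_3)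
  have pP: "p \<in> P" "p' \<in> P" using col_P pp by auto
  have dpq: "d p q = 2"
  proof -
    have "d q p \<ge> 2" using d3_nb[OF q(1) _ col_sym[OF pp]] q(2) d_sym by metis
    then show ?thesis using nD[OF q(1)] d_sym by (metis le_antisym)
  qed
  have npq: "\<not> col p q" "p \<noteq> q" using d2_noncol pP q dpq by auto
  obtain Q where Q: "quad P L Q" "p \<in> Q" "q \<in> Q" using dense pP q dpq by blast
  obtain c where c: "col p c" "col c q" using d2_cn pP q dpq by blast
  have cQ: "c \<in> Q" using q_cn[OF Q c npq(2,1)] .
  have nbQ: "e \<in> Q" if e: "col q e" for e
  proof -
    obtain e' where l: "{q,e,e'} \<in> L" "e' \<noteq> q" "e' \<noteq> e" using third e by blast
    have qe: "q \<noteq> e" using col_neq e .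
    have "d p e \<le> 2" "d p e' \<le> 2" using nD line_P[OF l(1)] by auto
    then have "d p e = 1 \<or> d p e' = 1" using line_dist[OF l(1) qe l(3)[symmetric] l(2)[symmetric] pP(1)] dpq by linarith
    then obtain f where f: "f \<in> {e, e'}" "col p f" using d_1 pP line_P[OF l(1)] by blast
    have fq: "col f q" using on_line_col[OF l(1)] f l qe by auto
    have "f \<in> Q" using q_cn[OF Q f(2) fq npq(2,1)] .
    then have "{q,e,e'} \<subseteq> Q" using q_line[OF Q(1) l(1), of q f] Q(3) f fq col_neq by auto
    then show ?thesis by auto
  qed
  have p'Q: "p' \<notin> Q" using q_diam[OF Q(1) _ Q(3), of p'] q(2) by auto
  have cp': "d c p' = 2"
  proof -
    have "c \<noteq> p'"
    proof
      assume "c = p'"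
      then have "d p' q = 1" using d_col c(2) by simp
      then show False using q(2) by simp
    qed
    moreover have "\<not> col c p'"
    proof
      assume "col c p'"
      have "d p' q \<le> d p' c + d c q" using pP q col_P c by (intro d_tri) auto
      moreover have "d p' c = 1" "d c q = 1" using d_col \<open>col c p'\<close> c col_sym by auto
      ultimately show False using q(2) by linarith
    qed
    ultimately show ?thesis using col_d2[OF col_sym[OF c(1)] pp] by blast
  qed
  obtain w where w: "w \<noteq> p" "col c w" "col w p'"
  proof -
    obtain w1 w2 where "w1 \<noteq> w2" "col c w1" "col w1 p'" "col c w2" "col w2 p'"
      using two_cn cp' col_P c pP by blast
    then show ?thesis using that by metis
  qed
  have wQ: "w \<notin> Q"
  proof
    assume wQ: "w \<in> Q"
    have "p \<noteq> w" using w by auto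
    show False
    proof (cases "col p w")
      case True
      obtain z where l: "{p,w,z} \<in> L" "z \<noteq> p" "z \<noteq> w" using third True by blast
      have "p' \<in> {p,w,z}" using no_tri[OF l(1), of p w p'] \<open>p \<noteq> w\<close> pp w col_sym by auto
      moreover have "{p,w,z} \<subseteq> Q" using q_line[OF Q(1) l(1) \<open>p \<noteq> w\<close>] Q wQ by auto
      ultimately show False using p'Q by auto
    next
      case False
      then have "p' \<in> Q" using q_cn[OF Q(1,2) wQ pp col_sym[OF w(3)]] \<open>p \<noteq> w\<close> by blast
      then show False using p'Q by simp
    qed
  qed
  have dwq: "d w q = 2"
  proof -
    have "w \<noteq> q" using wQ Q by auto
    moreover have "\<not> col w q" using nbQ wQ col_sym by blast
    ultimately show ?thesis using col_d2[OF col_sym[OF w(2)] c(2)] by blast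
  qed
  obtain e where e: "e \<noteq> c" "col w e" "col e q"
  proof -
    obtain e1 e2 where "e1 \<noteq> e2" "col w e1" "col e1 q" "col w e2" "col e2 q"
      using two_cn dwq col_P w q by blast
    then show ?thesis using that by metis
  qed
  have eQ: "e \<in> Q" using nbQ e col_sym by blast
  show False
  proof (cases "col c e")
    case True
    obtain z where l: "{c,e,z} \<in> L" "z \<noteq> c" "z \<noteq> e" using third True by blast
    have "w \<in> {c,e,z}" using no_tri[OF l(1), of c e w] e w col_sym by auto
    moreover have "{c,e,z} \<subseteq> Q" using q_line[OF Q(1) l(1)] e(1) cQ eQ by auto
    ultimately show False using wQ by auto
  next
    case False
    then have "w \<in> Q" using q_cn[OF Q(1) cQ eQ w(2) e(2) e(1)[symmetric]] by blast
    then show False using wQ by simp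
  qed
qed

lemma all_opp: "x \<in> P \<Longrightarrow> \<exists>y\<in>P. d x y = 3"
proof -
  assume xP: "x \<in> P"
  obtain x0 y0 where x0: "x0 \<in> P" "y0 \<in> P" "d x0 y0 = 3" using ex3 by blast
  obtain n where "(x0, x) \<in> adj_rel L ^^ n" using conn x0 xP by blast
  then show ?thesis
  proof (induction n arbitrary: x)
    case 0
    then show ?case using x0 by auto
  next
    case (Suc n)
    then obtain y where y: "(x0, y) \<in> adj_rel L ^^ n" "(y, x) \<in> adj_rel L" by auto
    then have "col y x" by (simp add: adj_rel_def)
    moreover obtain q where "q \<in> P" "d y q = 3" using Suc.IH y(1) by blast
    ultimately show ?case using opp_prop[of x y q] col_sym by blast
  qed
qed

end

context nhrep
begin

lemma com_inv: assumes "p \<in> P" "q \<in> P" shows "inv\<^bsub>R\<^esub> (com q p) = com p q"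
proof -
  interpret G: group R by (rule grp)
  have c: "r p \<in> carrier R" "r q \<in> carrier R" using r_carr assms by auto
  show ?thesis unfolding com_def using c r_inv assms by (simp add: G.inv_mult_group G.m_assoc)
qed

definition mu :: "'p \<Rightarrow> 'g" where
  "mu p = com p (SOME q. q \<in> P \<and> d p q = 3)"

lemma mu_eq: assumes "p \<in> P" "q \<in> P" "d p q = 3" shows "com p q = mu p"
proof -
  have "\<exists>q. q \<in> P \<and> d p q = 3" using assms by blast
  then have "(SOME q. q \<in> P \<and> d p q = 3) \<in> P \<and> d p (SOME q. q \<in> P \<and> d p q = 3) = 3" by (rule someI_ex)
  then show ?thesis unfolding mu_def using gamma3_const assms by metis
qed

lemma mu_opp: assumes "p \<in> P" "b \<in> P" "q \<in> P" "d q p = 3" "d q b = 3" shows "mu p = mu b"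
proof -
  have "com q p = com q b" using mu_eq assms by metis
  then have "inv\<^bsub>R\<^esub> (com q p) = inv\<^bsub>R\<^esub> (com q b)" by simp
  then have "com p q = com b q" using com_inv assms by metis
  then show ?thesis using mu_eq assms d_sym by metis
qed

lemma mu_line: assumes l: "{p,a,b} \<in> L" shows "mu p = mu a \<or> mu p = mu b"
proof -
  have ds: "p \<noteq> a" "a \<noteq> b" "p \<noteq> b" using line_distinct l by auto
  have P: "p \<in> P" "a \<in> P" "b \<in> P" using line_P l by auto
  obtain q where q: "q \<in> P" "d p q = 3" using all_opp P by blast
  have "d q p = 3" using q d_sym by metis
  then have "d q a = 3 \<or> d q b = 3" using line_dist[OF l ds q(1)] d_le3 q P by (metis Suc_n_not_le_n eval_nat_numeral(3))
  then show ?thesis using mu_opp P q \<open>d q p = 3\<close> by metis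
qed

lemma mu_col: assumes "col p a" shows "mu p = mu a"
proof -
  obtain b where l: "{p,a,b} \<in> L" "b \<noteq> p" "b \<noteq> a" using third assms by blast
  have l2: "{a,p,b} \<in> L" using l(1) by (simp add: insert_commute)
  have "mu p = mu a \<or> mu p = mu b" using mu_line[OF l(1)] .
  moreover have "mu a = mu p \<or> mu a = mu b" using mu_line[OF l2] .
  ultimately show ?thesis by metis
qed

lemma mu_const: assumes "x \<in> P" "y \<in> P" shows "mu x = mu y"
proof -
  obtain n where "(x, y) \<in> adj_rel L ^^ n" using conn assms by blast
  then show ?thesis
  proof (induction n arbitrary: y)
    case 0 then show ?case by simp
  next
    case (Suc n)
    then obtain z where z: "(x, z) \<in> adj_rel L ^^ n" "(z, y) \<in> adj_rel L" by auto
    then have "col z y" by (simp add: adj_rel_def)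
    then show ?case using Suc.IH[OF z(1)] mu_col by simp
  qed
qed

lemma com_const: assumes "p \<in> P" "q \<in> P" "d p q = 3" "p' \<in> P" "q' \<in> P" "d p' q' = 3"
  shows "com p q = com p' q'"
  using mu_eq mu_const assms by metis

end

context group
begin


lemma inv_invol: "s \<in> carrier G \<Longrightarrow> s \<otimes> s = \<one> \<Longrightarrow> inv s = s"
  using inv_equality by blast

lemma comm_inv: "h \<in> carrier G \<Longrightarrow> s \<in> carrier G \<Longrightarrow> h \<otimes> s = s \<otimes> h \<Longrightarrow> h \<otimes> inv s = inv s \<otimes> h"
proof -
  assume a: "h \<in> carrier G" "s \<in> carrier G" "h \<otimes> s = s \<otimes> h"
  have "inv s \<otimes> h = inv s \<otimes> (h \<otimes> s) \<otimes> inv s" using a(1,2) by (simp add: m_assoc)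
  also have "\<dots> = inv s \<otimes> (s \<otimes> h) \<otimes> inv s" using a by simp
  also have "\<dots> = h \<otimes> inv s" using a(1,2) by (simp add: m_assoc[symmetric])
  finally show ?thesis by simp
qed

lemma comm_gen:
  assumes h: "h \<in> carrier G" and S: "S \<subseteq> carrier G" and c: "\<forall>s\<in>S. h \<otimes> s = s \<otimes> h"
    and x: "x \<in> generate G S"
  shows "h \<otimes> x = x \<otimes> h"
  using x
proof (induction rule: generate.induct)
  case one then show ?case using h by simp
next
  case (incl s) then show ?case using c by blast
next
  case (inv s) then show ?case using comm_inv h S c by blast
next
  case (eng h1 h2)
  have c1: "h1 \<in> carrier G" "h2 \<in> carrier G" using eng generate_in_carrier S by auto
  have "h \<otimes> (h1 \<otimes> h2) = (h \<otimes> h1) \<otimes> h2" using h c1 by (simp add: m_assoc)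
  also have "\<dots> = h1 \<otimes> (h \<otimes> h2)" using eng h c1 by (simp add: m_assoc)
  also have "\<dots> = (h1 \<otimes> h2) \<otimes> h" using eng h c1 by (simp add: m_assoc)
  finally show ?case .
qed

lemma gen_comm_all:
  assumes S: "S \<subseteq> carrier G" and c: "\<forall>s\<in>S. \<forall>t\<in>S. s \<otimes> t = t \<otimes> s"
    and x: "x \<in> generate G S" and y: "y \<in> generate G S"
  shows "x \<otimes> y = y \<otimes> x"
proof -
  have "\<forall>s\<in>S. y \<otimes> s = s \<otimes> y"
  proof
    fix s assume s: "s \<in> S"
    have "s \<otimes> y = y \<otimes> s" using comm_gen[OF _ S _ y] s S c by blast
    then show "y \<otimes> s = s \<otimes> y" by simp
  qed
  then have "y \<otimes> x = x \<otimes> y" using comm_gen[OF _ S _ x] generate_in_carrier[OF S y] by blast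
  then show ?thesis by simp
qed

lemma gen_insert:
  assumes S: "S \<subseteq> carrier G" and t: "t \<in> carrier G" "t \<otimes> t = \<one>"
    and invS: "\<forall>s\<in>S. s \<otimes> s = \<one>" and c: "\<forall>s\<in>S. t \<otimes> s = s \<otimes> t"
  shows "generate G (insert t S) = generate G S \<union> (\<lambda>x. t \<otimes> x) ` generate G S"
proof
  have sub: "generate G S \<subseteq> generate G (insert t S)" by (rule mono_generate) auto
  have tin: "t \<in> generate G (insert t S)" by (rule generate.incl) simp
  show "generate G S \<union> (\<lambda>x. t \<otimes> x) ` generate G S \<subseteq> generate G (insert t S)"
  proof
    fix y assume "y \<in> generate G S \<union> (\<lambda>x. t \<otimes> x) ` generate G S"
    then show "y \<in> generate G (insert t S)"
    proof
      assume "y \<in> generate G S" then show ?thesis using sub by blast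
    next
      assume "y \<in> (\<lambda>x. t \<otimes> x) ` generate G S"
      then obtain x where x: "x \<in> generate G S" "y = t \<otimes> x" by blast
      have "x \<in> generate G (insert t S)" using sub x(1) by blast
      then show ?thesis unfolding x(2) by (rule generate.eng[OF tin])
    qed
  qed
next
  let ?H = "generate G S"
  have Hc: "?H \<subseteq> carrier G" using generate_incl S by blast
  have tH: "t \<otimes> x = x \<otimes> t" if "x \<in> ?H" for x using comm_gen[OF t(1) S c that] .
  have one_in: "t \<in> (\<lambda>x. t \<otimes> x) ` ?H"
  proof (rule image_eqI)
    show "t = t \<otimes> \<one>" using t by simp
    show "\<one> \<in> ?H" by (rule generate.one)
  qed
  have gen1: "h \<in> ?H \<union> (\<lambda>x. t \<otimes> x) ` ?H" if "h \<in> insert t S" for h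
  proof (cases "h = t")
    case True then show ?thesis using one_in by simp
  next
    case False then have "h \<in> S" using that by simp
    then have "h \<in> ?H" by (rule generate.incl)
    then show ?thesis by simp
  qed
  show "generate G (insert t S) \<subseteq> ?H \<union> (\<lambda>x. t \<otimes> x) ` ?H"
  proof
    fix x assume "x \<in> generate G (insert t S)"
    then show "x \<in> ?H \<union> (\<lambda>x. t \<otimes> x) ` ?H"
    proof (induction rule: generate.induct)
      case one
      have "\<one> \<in> ?H" by (rule generate.one)
      then show ?case by simp
    next
      case (incl h)
      then show ?case by (rule gen1)
    next
      case (inv h)
      have hS: "h \<in> insert t S" using inv.hyps .
      have hh: "h \<otimes> h = \<one>" "h \<in> carrier G" using invS t hS S by auto
      have "inv h = h" using inv_invol[OF hh(2,1)] .
      then show ?case using gen1[OF hS] by simp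
    next
      case (eng h1 h2)
      from eng.IH(1) show ?case
      proof
        assume h1: "h1 \<in> ?H"
        from eng.IH(2) show ?thesis
        proof
          assume h2: "h2 \<in> ?H"
          have "h1 \<otimes> h2 \<in> ?H" using h1 h2 by (rule generate.eng)
          then show ?thesis by simp
        next
          assume "h2 \<in> (\<lambda>x. t \<otimes> x) ` ?H"
          then obtain x2 where x2: "x2 \<in> ?H" "h2 = t \<otimes> x2" by blast
          have c1: "h1 \<in> carrier G" "x2 \<in> carrier G" using h1 x2 Hc by auto
          have "h1 \<otimes> h2 = (h1 \<otimes> t) \<otimes> x2" using x2(2) c1 t by (simp add: m_assoc)
          also have "\<dots> = (t \<otimes> h1) \<otimes> x2" using tH[OF h1] by simp
          also have "\<dots> = t \<otimes> (h1 \<otimes> x2)" using c1 t by (simp add: m_assoc)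
          finally have e: "h1 \<otimes> h2 = t \<otimes> (h1 \<otimes> x2)" .
          have "h1 \<otimes> x2 \<in> ?H" using h1 x2(1) by (rule generate.eng)
          then show ?thesis unfolding e by blast
        qed
      next
        assume "h1 \<in> (\<lambda>x. t \<otimes> x) ` ?H"
        then obtain x1 where x1: "x1 \<in> ?H" "h1 = t \<otimes> x1" by blast
        from eng.IH(2) show ?thesis
        proof
          assume h2: "h2 \<in> ?H"
          have c1: "x1 \<in> carrier G" "h2 \<in> carrier G" using h2 x1 Hc by auto
          have e: "h1 \<otimes> h2 = t \<otimes> (x1 \<otimes> h2)" using x1(2) c1 t by (simp add: m_assoc)
          have "x1 \<otimes> h2 \<in> ?H" using x1(1) h2 by (rule generate.eng)
          then show ?thesis unfolding e by blast
        next
          assume "h2 \<in> (\<lambda>x. t \<otimes> x) ` ?H"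
          then obtain x2 where x2: "x2 \<in> ?H" "h2 = t \<otimes> x2" by blast
          have c1: "x1 \<in> carrier G" "x2 \<in> carrier G" using x1 x2 Hc by auto
          have "h1 \<otimes> h2 = t \<otimes> ((x1 \<otimes> t) \<otimes> x2)" using x1(2) x2(2) c1 t by (simp add: m_assoc)
          also have "\<dots> = t \<otimes> ((t \<otimes> x1) \<otimes> x2)" using tH[OF x1(1)] by simp
          also have "\<dots> = (t \<otimes> t) \<otimes> (x1 \<otimes> x2)" using c1 t(1) by (simp add: m_assoc)
          also have "\<dots> = x1 \<otimes> x2" using c1 t by (simp add: m_assoc[symmetric])
          finally have e: "h1 \<otimes> h2 = x1 \<otimes> x2" .
          have "x1 \<otimes> x2 \<in> ?H" using x1(1) x2(1) by (rule generate.eng)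
          then show ?thesis unfolding e by simp
        qed
      qed
    qed
  qed
qed

lemma gen_card:
  assumes fin: "finite T"
  shows "T \<subseteq> carrier G \<Longrightarrow> (\<forall>s\<in>T. s \<otimes> s = \<one>) \<Longrightarrow> (\<forall>s\<in>T. \<forall>u\<in>T. s \<otimes> u = u \<otimes> s) \<Longrightarrow>
    (\<forall>s\<in>T. s \<notin> generate G (T - {s})) \<Longrightarrow> finite (generate G T) \<and> card (generate G T) = 2 ^ card T"
  using fin
proof (induction T rule: finite_induct)
  case empty
  have "generate G {} = {\<one>}" by (rule generate_empty)
  then show ?case by simp
next
  case (insert t F)
  have F: "F \<subseteq> carrier G" "\<forall>s\<in>F. s \<otimes> s = \<one>" "\<forall>s\<in>F. \<forall>u\<in>F. s \<otimes> u = u \<otimes> s"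
    using insert.prems(1,2,3) by blast+
  have indF: "\<forall>s\<in>F. s \<notin> generate G (F - {s})"
  proof
    fix s assume s: "s \<in> F"
    have "generate G (F - {s}) \<subseteq> generate G (insert t F - {s})" by (rule mono_generate) auto
    then show "s \<notin> generate G (F - {s})" using insert.prems(4) s by blast
  qed
  have IH: "finite (generate G F)" "card (generate G F) = 2 ^ card F" using insert.IH[OF F indF] by blast+
  have t: "t \<in> carrier G" "t \<otimes> t = \<one>" "\<forall>s\<in>F. t \<otimes> s = s \<otimes> t" using insert.prems(1,2,3) by blast+
  have eq: "generate G (insert t F) = generate G F \<union> (\<lambda>x. t \<otimes> x) ` generate G F"
    using gen_insert[OF F(1) t(1,2) F(2) t(3)] .
  have Hc: "generate G F \<subseteq> carrier G" using generate_incl F(1) by blast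
  have tn0: "t \<notin> generate G (insert t F - {t})" using insert.prems(4) by blast
  have "insert t F - {t} = F" using insert.hyps(2) by blast
  then have tn: "t \<notin> generate G F" using tn0 by simp
  have disj: "generate G F \<inter> (\<lambda>x. t \<otimes> x) ` generate G F = {}"
  proof (rule ccontr)
    assume "generate G F \<inter> (\<lambda>x. t \<otimes> x) ` generate G F \<noteq> {}"
    then obtain x y where xy: "x \<in> generate G F" "y \<in> generate G F" "y = t \<otimes> x" by blast
    have xc: "x \<in> carrier G" using xy(1) Hc by blast
    have "y \<otimes> inv x = t \<otimes> (x \<otimes> inv x)" unfolding xy(3) using xc t(1) by (simp add: m_assoc)
    then have "t = y \<otimes> inv x" using xc t(1) by simp
    moreover have "y \<otimes> inv x \<in> generate G F"
      using generate.eng[OF xy(2) generate_m_inv_closed[OF F(1) xy(1)]] .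
    ultimately show False using tn by simp
  qed
  have inj: "inj_on (\<lambda>x. t \<otimes> x) (generate G F)"
  proof (rule inj_onI)
    fix x y assume "x \<in> generate G F" "y \<in> generate G F" "t \<otimes> x = t \<otimes> y"
    then show "x = y" using lcan[of t x y] Hc t(1) by blast
  qed
  have "card (generate G (insert t F)) = card (generate G F) + card ((\<lambda>x. t \<otimes> x) ` generate G F)"
    unfolding eq using IH(1) disj by (intro card_Un_disjoint) simp_all
  also have "\<dots> = 2 * 2 ^ card F" using card_image[OF inj] IH by simp
  also have "\<dots> = 2 ^ card (insert t F)" using insert.hyps by simp
  finally have "card (generate G (insert t F)) = 2 ^ card (insert t F)" .
  moreover have "finite (generate G (insert t F))" unfolding eq using IH(1) by simp
  ultimately show ?case by simp
qed

end

lemma half_card: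
  assumes A: "finite A" and B: "B \<subseteq> A" and inj: "inj_on f A"
    and f1: "\<forall>x\<in>B. f x \<in> A - B" and f2: "\<forall>x\<in>A - B. f x \<in> B"
  shows "card A = 2 * card B"
proof -
  have fB: "finite B" "finite (A - B)" using A B finite_subset by auto
  have "card B \<le> card (A - B)"
    using card_inj_on_le[of f B "A - B"] inj_on_subset[OF inj B] f1 fB by blast
  moreover have "card (A - B) \<le> card B"
    using card_inj_on_le[of f "A - B" B] inj_on_subset[OF inj, of "A - B"] f2 fB by blast
  moreover have "card (A - B) = card A - card B" using card_Diff_subset fB(1) B by blast
  moreover have "card B \<le> card A" using card_mono A B by blast
  ultimately show ?thesis by linarith
qed

context group
begin

lemma acm_mult1:
  assumes car: "g1 \<in> carrier G" "g2 \<in> carrier G" "h \<in> carrier G" "c1 \<in> carrier G" "c2 \<in> carrier G"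
    and cen: "\<forall>x\<in>carrier G. c1 \<otimes> x = x \<otimes> c1" "\<forall>x\<in>carrier G. c2 \<otimes> x = x \<otimes> c2"
    and e1: "g1 \<otimes> h = c1 \<otimes> (h \<otimes> g1)" and e2: "g2 \<otimes> h = c2 \<otimes> (h \<otimes> g2)"
  shows "(g1 \<otimes> g2) \<otimes> h = (c1 \<otimes> c2) \<otimes> (h \<otimes> (g1 \<otimes> g2))"
proof -
  have "(g1 \<otimes> g2) \<otimes> h = g1 \<otimes> (g2 \<otimes> h)" using car by (simp add: m_assoc)
  also have "\<dots> = g1 \<otimes> (c2 \<otimes> (h \<otimes> g2))" using e2 by simp
  also have "\<dots> = (g1 \<otimes> c2) \<otimes> (h \<otimes> g2)" using car by (simp add: m_assoc)
  also have "\<dots> = (c2 \<otimes> g1) \<otimes> (h \<otimes> g2)"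
  proof -
    have "c2 \<otimes> g1 = g1 \<otimes> c2" using cen(2) car(1) by blast
    then show ?thesis by simp
  qed
  also have "\<dots> = c2 \<otimes> ((g1 \<otimes> h) \<otimes> g2)" using car by (simp add: m_assoc)
  also have "\<dots> = c2 \<otimes> ((c1 \<otimes> (h \<otimes> g1)) \<otimes> g2)" using e1 by simp
  also have "\<dots> = (c2 \<otimes> c1) \<otimes> (h \<otimes> (g1 \<otimes> g2))" using car by (simp add: m_assoc)
  also have "\<dots> = (c1 \<otimes> c2) \<otimes> (h \<otimes> (g1 \<otimes> g2))"
  proof -
    have "c1 \<otimes> c2 = c2 \<otimes> c1" using cen(1) car(5) by blast
    then show ?thesis by simp
  qed
  finally show ?thesis .
qed

lemma acm_mult2:
  assumes car: "g \<in> carrier G" "h1 \<in> carrier G" "h2 \<in> carrier G" "c1 \<in> carrier G" "c2 \<in> carrier G"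
    and cen: "\<forall>x\<in>carrier G. c1 \<otimes> x = x \<otimes> c1" "\<forall>x\<in>carrier G. c2 \<otimes> x = x \<otimes> c2"
    and e1: "g \<otimes> h1 = c1 \<otimes> (h1 \<otimes> g)" and e2: "g \<otimes> h2 = c2 \<otimes> (h2 \<otimes> g)"
  shows "g \<otimes> (h1 \<otimes> h2) = (c1 \<otimes> c2) \<otimes> ((h1 \<otimes> h2) \<otimes> g)"
proof -
  have "g \<otimes> (h1 \<otimes> h2) = (g \<otimes> h1) \<otimes> h2" using car by (simp add: m_assoc)
  also have "\<dots> = (c1 \<otimes> (h1 \<otimes> g)) \<otimes> h2" using e1 by simp
  also have "\<dots> = c1 \<otimes> (h1 \<otimes> (g \<otimes> h2))" using car by (simp add: m_assoc)
  also have "\<dots> = c1 \<otimes> (h1 \<otimes> (c2 \<otimes> (h2 \<otimes> g)))" using e2 by simp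
  also have "\<dots> = c1 \<otimes> ((h1 \<otimes> c2) \<otimes> (h2 \<otimes> g))" using car by (simp add: m_assoc)
  also have "\<dots> = c1 \<otimes> ((c2 \<otimes> h1) \<otimes> (h2 \<otimes> g))"
  proof -
    have "c2 \<otimes> h1 = h1 \<otimes> c2" using cen(2) car(2) by blast
    then show ?thesis by simp
  qed
  also have "\<dots> = (c1 \<otimes> c2) \<otimes> ((h1 \<otimes> h2) \<otimes> g)" using car by (simp add: m_assoc)
  finally show ?thesis .
qed

lemma zset:
  assumes z: "z \<in> carrier G" "\<forall>x\<in>carrier G. z \<otimes> x = x \<otimes> z" "z \<otimes> z = \<one>"
    and c: "c \<in> {\<one>, z}"
  shows "c \<in> carrier G" "\<forall>x\<in>carrier G. c \<otimes> x = x \<otimes> c"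
  using c z by fastforce+

lemma zset_mult:
  assumes z: "z \<in> carrier G" "z \<otimes> z = \<one>" and c: "c1 \<in> {\<one>, z}" "c2 \<in> {\<one>, z}"
  shows "c1 \<otimes> c2 \<in> {\<one>, z}"
  using c z by fastforce

lemma acm_gen:
  assumes z: "z \<in> carrier G" "\<forall>x\<in>carrier G. z \<otimes> x = x \<otimes> z" "z \<otimes> z = \<one>"
    and S: "S \<subseteq> carrier G" and invS: "\<forall>s\<in>S. s \<otimes> s = \<one>"
    and a: "\<forall>s\<in>S. \<forall>t\<in>S. \<exists>c\<in>{\<one>, z}. s \<otimes> t = c \<otimes> (t \<otimes> s)"
    and g: "g \<in> generate G S" and h: "h \<in> generate G S"
  shows "\<exists>c\<in>{\<one>, z}. g \<otimes> h = c \<otimes> (h \<otimes> g)"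
proof -
  have Hc: "generate G S \<subseteq> carrier G" using generate_incl S by blast
  have invs: "inv s = s" if "s \<in> S" for s using inv_invol that S invS by blast
  have step1: "\<exists>c\<in>{\<one>, z}. s \<otimes> h' = c \<otimes> (h' \<otimes> s)" if s: "s \<in> S" and h': "h' \<in> generate G S" for s h'
    using h'
  proof (induction rule: generate.induct)
    case one
    have "s \<otimes> \<one> = \<one> \<otimes> (\<one> \<otimes> s)" using s S by auto
    then show ?case by blast
  next
    case (incl t) then show ?case using a s by blast
  next
    case (inv t) then show ?case using a s invs by simp
  next
    case (eng h1 h2)
    obtain c1 c2 where c: "c1 \<in> {\<one>, z}" "c2 \<in> {\<one>, z}" "s \<otimes> h1 = c1 \<otimes> (h1 \<otimes> s)" "s \<otimes> h2 = c2 \<otimes> (h2 \<otimes> s)"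
      using eng.IH by blast
    have "s \<otimes> (h1 \<otimes> h2) = (c1 \<otimes> c2) \<otimes> ((h1 \<otimes> h2) \<otimes> s)"
      using acm_mult2[OF _ _ _ zset(1)[OF z c(1)] zset(1)[OF z c(2)] zset(2)[OF z c(1)] zset(2)[OF z c(2)] c(3,4)]
        s S eng.hyps Hc by blast
    then show ?case using zset_mult[OF z(1,3) c(1,2)] by blast
  qed
  show ?thesis using g
  proof (induction rule: generate.induct)
    case one
    have "\<one> \<otimes> h = \<one> \<otimes> (h \<otimes> \<one>)" using h Hc by auto
    then show ?case by blast
  next
    case (incl s) then show ?case using step1 h by blast
  next
    case (inv s) then show ?case using step1 h invs by simp
  next
    case (eng g1 g2)
    obtain c1 c2 where c: "c1 \<in> {\<one>, z}" "c2 \<in> {\<one>, z}" "g1 \<otimes> h = c1 \<otimes> (h \<otimes> g1)" "g2 \<otimes> h = c2 \<otimes> (h \<otimes> g2)"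
      using eng.IH by blast
    have "(g1 \<otimes> g2) \<otimes> h = (c1 \<otimes> c2) \<otimes> (h \<otimes> (g1 \<otimes> g2))"
      using acm_mult1[OF _ _ _ zset(1)[OF z c(1)] zset(1)[OF z c(2)] zset(2)[OF z c(1)] zset(2)[OF z c(2)] c(3,4)]
        h eng.hyps Hc by blast
    then show ?case using zset_mult[OF z(1,3) c(1,2)] by blast
  qed
qed

end

context group
begin

lemma anti:
  assumes acm: "\<forall>g\<in>carrier G. \<forall>h\<in>carrier G. \<exists>c\<in>{\<one>, z}. g \<otimes> h = c \<otimes> (h \<otimes> g)"
    and g: "g \<in> carrier G" and h: "h \<in> carrier G" and n: "g \<otimes> h \<noteq> h \<otimes> g"
  shows "g \<otimes> h = z \<otimes> (h \<otimes> g)"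
proof -
  obtain c where c: "c \<in> {\<one>, z}" "g \<otimes> h = c \<otimes> (h \<otimes> g)" using acm g h by blast
  have "c \<noteq> \<one>" using c n g h by auto
  then show ?thesis using c by auto
qed

lemma count_bound:
  assumes fin: "finite (carrier G)"
    and Msg: "subgroup M G"
    and Mab: "\<forall>m\<in>M. \<forall>n\<in>M. m \<otimes> n = n \<otimes> m"
    and MZ: "\<forall>m\<in>M. m \<noteq> \<one> \<longrightarrow> (\<exists>g\<in>carrier G. g \<otimes> m \<noteq> m \<otimes> g)"
    and z: "z \<in> carrier G" "\<forall>x\<in>carrier G. z \<otimes> x = x \<otimes> z" "z \<otimes> z = \<one>" "z \<noteq> \<one>" "z \<notin> M"
    and acm: "\<forall>g\<in>carrier G. \<forall>h\<in>carrier G. \<exists>c\<in>{\<one>, z}. g \<otimes> h = c \<otimes> (h \<otimes> g)"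
  shows "2 * card M * card M \<le> card (carrier G)"
proof -
  have Mc: "M \<subseteq> carrier G" using Msg subgroup.subset by blast
  have finM: "finite M" using fin Mc finite_subset by blast
  have z1: "\<one> \<in> carrier G" "\<forall>x\<in>carrier G. \<one> \<otimes> x = x \<otimes> \<one>" by auto
  define Cen where "Cen m = {g \<in> carrier G. g \<otimes> m = m \<otimes> g}" for m
  define C where "C = {g \<in> carrier G. \<forall>m\<in>M. g \<otimes> m = m \<otimes> g}"
  define Cm where "Cm g = {m \<in> M. g \<otimes> m = m \<otimes> g}" for g
  have zz1: "z \<otimes> z = \<one>" using z by blast
  have ca: "card (carrier G) = 2 * card (Cen m)" if m: "m \<in> M" "m \<noteq> \<one>" for m
  proof -
    have mc: "m \<in> carrier G" using m Mc by blast
    obtain h0 where h0: "h0 \<in> carrier G" "h0 \<otimes> m \<noteq> m \<otimes> h0" using MZ m by blast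
    have h0a: "h0 \<otimes> m = z \<otimes> (m \<otimes> h0)" using anti[OF acm h0(1) mc h0(2)] .
    show ?thesis
    proof (rule half_card[OF fin, of "Cen m" "\<lambda>g. g \<otimes> h0"])
      show "Cen m \<subseteq> carrier G" unfolding Cen_def by blast
      show "inj_on (\<lambda>g. g \<otimes> h0) (carrier G)" using h0(1) by (intro inj_onI) simp
      show "\<forall>x\<in>Cen m. x \<otimes> h0 \<in> carrier G - Cen m"
      proof
        fix g assume g: "g \<in> Cen m"
        have gc: "g \<in> carrier G" "g \<otimes> m = \<one> \<otimes> (m \<otimes> g)" using g mc unfolding Cen_def by auto
        have e: "(g \<otimes> h0) \<otimes> m = (\<one> \<otimes> z) \<otimes> (m \<otimes> (g \<otimes> h0))"
          using acm_mult1[OF gc(1) h0(1) mc z1(1) z(1) z1(2) z(2) gc(2) h0a] .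
        have ghc: "g \<otimes> h0 \<in> carrier G" "m \<otimes> (g \<otimes> h0) \<in> carrier G" using gc h0 mc by auto
        have "(g \<otimes> h0) \<otimes> m \<noteq> m \<otimes> (g \<otimes> h0)"
        proof
          assume "(g \<otimes> h0) \<otimes> m = m \<otimes> (g \<otimes> h0)"
          then have "z \<otimes> (m \<otimes> (g \<otimes> h0)) = m \<otimes> (g \<otimes> h0)" using e z(1) by simp
          then have "z = \<one>" using r_cancel_one[OF ghc(2) z(1)] by blast
          then show False using z(4) by simp
        qed
        then show "g \<otimes> h0 \<in> carrier G - Cen m" using ghc unfolding Cen_def by blast
      qed
      show "\<forall>x\<in>carrier G - Cen m. x \<otimes> h0 \<in> Cen m"
      proof
        fix g assume g: "g \<in> carrier G - Cen m"
        have gc: "g \<in> carrier G" "g \<otimes> m \<noteq> m \<otimes> g" using g unfolding Cen_def by auto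
        have ga: "g \<otimes> m = z \<otimes> (m \<otimes> g)" using anti[OF acm gc(1) mc gc(2)] .
        have e: "(g \<otimes> h0) \<otimes> m = (z \<otimes> z) \<otimes> (m \<otimes> (g \<otimes> h0))"
          using acm_mult1[OF gc(1) h0(1) mc z(1) z(1) z(2) z(2) ga h0a] .
        have ghc: "g \<otimes> h0 \<in> carrier G" "m \<otimes> (g \<otimes> h0) \<in> carrier G" using gc h0 mc by auto
        have "(g \<otimes> h0) \<otimes> m = m \<otimes> (g \<otimes> h0)" using e zz1 ghc by simp
        then show "g \<otimes> h0 \<in> Cen m" using ghc unfolding Cen_def by blast
      qed
    qed
  qed
  have cb: "card M = 2 * card (Cm g)" if g: "g \<in> carrier G" "g \<notin> C" for g
  proof -
    obtain m0 where m0: "m0 \<in> M" "g \<otimes> m0 \<noteq> m0 \<otimes> g" using g unfolding C_def by blast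
    have m0c: "m0 \<in> carrier G" using m0 Mc by blast
    have m0a: "g \<otimes> m0 = z \<otimes> (m0 \<otimes> g)" using anti[OF acm g(1) m0c m0(2)] .
    show ?thesis
    proof (rule half_card[OF finM, of "Cm g" "\<lambda>m. m \<otimes> m0"])
      show "Cm g \<subseteq> M" unfolding Cm_def by blast
      show "inj_on (\<lambda>m. m \<otimes> m0) M" using m0c Mc by (intro inj_onI) (simp add: subsetD)
      show "\<forall>x\<in>Cm g. x \<otimes> m0 \<in> M - Cm g"
      proof
        fix m assume m: "m \<in> Cm g"
        have mc: "m \<in> M" "m \<in> carrier G" "g \<otimes> m = \<one> \<otimes> (m \<otimes> g)" using m Mc g unfolding Cm_def by auto
        have e: "g \<otimes> (m \<otimes> m0) = (\<one> \<otimes> z) \<otimes> ((m \<otimes> m0) \<otimes> g)"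
          using acm_mult2[OF g(1) mc(2) m0c z1(1) z(1) z1(2) z(2) mc(3) m0a] .
        have mmc: "m \<otimes> m0 \<in> M" "(m \<otimes> m0) \<otimes> g \<in> carrier G" using subgroup.m_closed[OF Msg mc(1) m0(1)] mc m0c g by auto
        have "g \<otimes> (m \<otimes> m0) \<noteq> (m \<otimes> m0) \<otimes> g"
        proof
          assume "g \<otimes> (m \<otimes> m0) = (m \<otimes> m0) \<otimes> g"
          then have "z \<otimes> ((m \<otimes> m0) \<otimes> g) = (m \<otimes> m0) \<otimes> g" using e z(1) by simp
          then have "z = \<one>" using r_cancel_one[OF mmc(2) z(1)] by blast
          then show False using z(4) by simp
        qed
        then show "m \<otimes> m0 \<in> M - Cm g" using mmc unfolding Cm_def by blast
      qed
      show "\<forall>x\<in>M - Cm g. x \<otimes> m0 \<in> Cm g"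
      proof
        fix m assume m: "m \<in> M - Cm g"
        have mc: "m \<in> M" "m \<in> carrier G" "g \<otimes> m \<noteq> m \<otimes> g" using m Mc unfolding Cm_def by auto
        have ma: "g \<otimes> m = z \<otimes> (m \<otimes> g)" using anti[OF acm g(1) mc(2) mc(3)] .
        have e: "g \<otimes> (m \<otimes> m0) = (z \<otimes> z) \<otimes> ((m \<otimes> m0) \<otimes> g)"
          using acm_mult2[OF g(1) mc(2) m0c z(1) z(1) z(2) z(2) ma m0a] .
        have mmc: "m \<otimes> m0 \<in> M" "(m \<otimes> m0) \<otimes> g \<in> carrier G" using subgroup.m_closed[OF Msg mc(1) m0(1)] mc m0c g by auto
        have "g \<otimes> (m \<otimes> m0) = (m \<otimes> m0) \<otimes> g" using e zz1 mmc by simp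
        then show "m \<otimes> m0 \<in> Cm g" using mmc unfolding Cm_def by blast
      qed
    qed
  qed
  have cc: "Cm g = M" if "g \<in> C" for g using that unfolding C_def Cm_def by blast
  have c1: "Cen \<one> = carrier G" unfolding Cen_def by auto
  \<comment> \<open>double counting\<close>
  define S1 where "S1 = (SIGMA g:carrier G. Cm g)"
  define S2 where "S2 = (SIGMA m:M. Cen m)"
  have fCm: "finite (Cm g)" for g using finM unfolding Cm_def by simp
  have fCen: "finite (Cen m)" for m using fin unfolding Cen_def by simp
  have "S2 = (\<lambda>(g, m). (m, g)) ` S1" unfolding S1_def S2_def Cm_def Cen_def using Mc by auto
  moreover have "inj_on (\<lambda>(g, m). (m, g)) S1" by (auto intro: inj_onI)
  ultimately have eqS: "card S1 = card S2" by (simp add: card_image)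
  have cS1: "card S1 = (\<Sum>g\<in>carrier G. card (Cm g))" unfolding S1_def using fin fCm by (simp add: card_SigmaI)
  have cS2: "card S2 = (\<Sum>m\<in>M. card (Cen m))" unfolding S2_def using finM fCen by (simp add: card_SigmaI)
  have CsubR: "C \<subseteq> carrier G" unfolding C_def by blast
  have finC: "finite C" using fin CsubR finite_subset by blast
  have "2 * card S1 = (\<Sum>g\<in>carrier G. 2 * card (Cm g))" using cS1 by (simp add: sum_distrib_left)
  also have "\<dots> = (\<Sum>g\<in>carrier G. if g \<in> C then 2 * card M else card M)"
  proof (rule sum.cong)
    fix g assume g: "g \<in> carrier G"
    show "2 * card (Cm g) = (if g \<in> C then 2 * card M else card M)"
    proof (cases "g \<in> C")
      case True then show ?thesis using cc[OF True] by simp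
    next
      case False then show ?thesis using cb[OF g False] by simp
    qed
  qed simp
  also have "\<dots> = (\<Sum>g\<in>C. 2 * card M) + (\<Sum>g\<in>carrier G - C. card M)"
  proof -
    have i1: "carrier G \<inter> {x. x \<in> C} = C" using CsubR by blast
    have i2: "carrier G \<inter> - {x. x \<in> C} = carrier G - C" by blast
    show ?thesis using sum.If_cases[OF fin, of "\<lambda>g. g \<in> C" "\<lambda>_. 2 * card M" "\<lambda>_. card M"]
      unfolding i1 i2 by simp
  qed
  also have "\<dots> = card C * (2 * card M) + card (carrier G - C) * card M" by simp
  finally have e1: "2 * card S1 = card C * (2 * card M) + card (carrier G - C) * card M" .
  have one_M: "\<one> \<in> M" using Msg subgroup.one_closed by blast
  have "2 * card S2 = (\<Sum>m\<in>M. 2 * card (Cen m))" using cS2 by (simp add: sum_distrib_left)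
  also have "\<dots> = (\<Sum>m\<in>M. if m = \<one> then 2 * card (carrier G) else card (carrier G))"
  proof (rule sum.cong)
    fix m assume m: "m \<in> M"
    show "2 * card (Cen m) = (if m = \<one> then 2 * card (carrier G) else card (carrier G))"
    proof (cases "m = \<one>")
      case True then show ?thesis using c1 by simp
    next
      case False then show ?thesis using ca[OF m False] by simp
    qed
  qed simp
  also have "\<dots> = 2 * card (carrier G) + (\<Sum>m\<in>M - {\<one>}. card (carrier G))"
  proof -
    have "(\<Sum>m\<in>M - {\<one>}. if m = \<one> then 2 * card (carrier G) else card (carrier G)) = (\<Sum>m\<in>M - {\<one>}. card (carrier G))"
      by (rule sum.cong) auto
    then show ?thesis
      using sum.remove[OF finM one_M, of "\<lambda>m. if m = \<one> then 2 * card (carrier G) else card (carrier G)"] by simp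
  qed
  also have "\<dots> = 2 * card (carrier G) + card (M - {\<one>}) * card (carrier G)" by simp
  finally have e2: "2 * card S2 = 2 * card (carrier G) + card (M - {\<one>}) * card (carrier G)" .
  define c where "c = card C"
  define e where "e = card (carrier G - C)"
  define n where "n = card (carrier G)"
  define k' where "k' = card (M - {\<one>})"
  have nce: "n = c + e" unfolding n_def c_def e_def using card_Diff_subset[OF finC CsubR] card_mono[OF fin CsubR] by linarith
  have kk: "card M = k' + 1" unfolding k'_def using card_Diff_singleton[OF one_M] finM card_gt_0_iff one_M
    by (metis One_nat_def Suc_pred empty_iff plus_1_eq_Suc add.commute)
  have "c * (2 * (k' + 1)) + e * (k' + 1) = 2 * n + k' * n" using e1 e2 eqS kk unfolding c_def e_def n_def k'_def by simp
  then have "c * (2 * (k' + 1)) + e * (k' + 1) = 2 * (c + e) + k' * (c + e)" using nce by simp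
  then have "c * k' = e" by (simp add: algebra_simps)
  then have nck: "n = c * card M" using nce kk by (simp add: algebra_simps)
  have MC: "M \<subseteq> C" unfolding C_def using Mc Mab by blast
  have zMC: "(\<lambda>m. z \<otimes> m) ` M \<subseteq> C"
  proof
    fix y assume "y \<in> (\<lambda>m. z \<otimes> m) ` M"
    then obtain m where m: "m \<in> M" "y = z \<otimes> m" by blast
    have mc: "m \<in> carrier G" using m Mc by blast
    have "(z \<otimes> m) \<otimes> n' = n' \<otimes> (z \<otimes> m)" if n': "n' \<in> M" for n'
    proof -
      have nc: "n' \<in> carrier G" using n' Mc by blast
      have "(z \<otimes> m) \<otimes> n' = z \<otimes> (m \<otimes> n')" using z(1) mc nc by (simp add: m_assoc)
      also have "\<dots> = z \<otimes> (n' \<otimes> m)" using Mab m(1) n' by metis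
      also have "\<dots> = (z \<otimes> n') \<otimes> m" using z(1) mc nc by (simp add: m_assoc)
      also have "\<dots> = (n' \<otimes> z) \<otimes> m" using z(2) nc by metis
      also have "\<dots> = n' \<otimes> (z \<otimes> m)" using z(1) mc nc by (simp add: m_assoc)
      finally show ?thesis .
    qed
    then show "y \<in> C" unfolding C_def using m z(1) mc by auto
  qed
  have disj: "M \<inter> (\<lambda>m. z \<otimes> m) ` M = {}"
  proof (rule ccontr)
    assume "M \<inter> (\<lambda>m. z \<otimes> m) ` M \<noteq> {}"
    then obtain m m' where mm: "m \<in> M" "m' \<in> M" "m' = z \<otimes> m" by blast
    have mc: "m \<in> carrier G" using mm Mc by blast
    have "m' \<otimes> inv m = z" using mm(3) mc z(1) by (simp add: m_assoc)
    moreover have "m' \<otimes> inv m \<in> M" using subgroup.m_closed[OF Msg mm(2) subgroup.m_inv_closed[OF Msg mm(1)]] .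
    ultimately show False using z(5) by simp
  qed
  have injz: "inj_on (\<lambda>m. z \<otimes> m) M" using z(1) Mc by (intro inj_onI) (simp add: subsetD lcan)
  have "card (M \<union> (\<lambda>m. z \<otimes> m) ` M) = 2 * card M"
    using card_Un_disjoint[OF finM finite_imageI[OF finM] disj] card_image[OF injz] by simp
  moreover have "card (M \<union> (\<lambda>m. z \<otimes> m) ` M) \<le> c" unfolding c_def using card_mono[OF finC] MC zMC by blast
  ultimately have "2 * card M \<le> c" by simp
  then have "2 * card M * card M \<le> c * card M" by simp
  then show ?thesis using nck unfolding n_def by simp
qed

end

context group
begin

lemma invol_comm:
  assumes c: "a \<in> carrier G" "b \<in> carrier G" and aa: "a \<otimes> a = \<one>" and bb: "b \<otimes> b = \<one>"
    and e: "a \<otimes> b \<otimes> a \<otimes> b = \<one>"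
  shows "a \<otimes> b = b \<otimes> a"
proof -
  have "(a \<otimes> b) \<otimes> (a \<otimes> b) = \<one>" using e c by (simp add: m_assoc)
  then have "inv (a \<otimes> b) = a \<otimes> b" using inv_invol c by simp
  moreover have "inv (a \<otimes> b) = b \<otimes> a" using c inv_invol aa bb by (simp add: inv_mult_group)
  ultimately show ?thesis by simp
qed

lemma invol_anti:
  assumes c: "a \<in> carrier G" "b \<in> carrier G" and aa: "a \<otimes> a = \<one>" and bb: "b \<otimes> b = \<one>"
    and e: "a \<otimes> b \<otimes> a \<otimes> b = z"
  shows "a \<otimes> b = z \<otimes> (b \<otimes> a)"
proof -
  have "z \<otimes> (b \<otimes> a) = a \<otimes> (b \<otimes> (a \<otimes> ((b \<otimes> b) \<otimes> a)))" unfolding e[symmetric] using c by (simp add: m_assoc)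
  also have "\<dots> = a \<otimes> (b \<otimes> (a \<otimes> a))" using c bb by simp
  also have "\<dots> = a \<otimes> b" using c aa by simp
  finally show ?thesis by simp
qed

lemma invol_comm2:
  assumes c: "a \<in> carrier G" "b \<in> carrier G" and aa: "a \<otimes> a = \<one>" and bb: "b \<otimes> b = \<one>"
    and e: "a \<otimes> b = b \<otimes> a"
  shows "a \<otimes> b \<otimes> a \<otimes> b = \<one>"
proof -
  have "a \<otimes> b \<otimes> a \<otimes> b = (a \<otimes> (b \<otimes> a)) \<otimes> b" using c by (simp add: m_assoc)
  also have "\<dots> = (a \<otimes> (a \<otimes> b)) \<otimes> b" using e by simp
  also have "\<dots> = (a \<otimes> a) \<otimes> (b \<otimes> b)" using c by (simp add: m_assoc)
  also have "\<dots> = \<one>" using aa bb by simp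
  finally show ?thesis .
qed

lemma central_step:
  assumes c: "a \<in> carrier G" "b \<in> carrier G" and aa: "a \<otimes> a = \<one>"
  shows "a \<otimes> (a \<otimes> b \<otimes> a \<otimes> b) = (b \<otimes> a \<otimes> b \<otimes> a) \<otimes> a"
proof -
  have "a \<otimes> (a \<otimes> b \<otimes> a \<otimes> b) = (a \<otimes> a) \<otimes> (b \<otimes> a \<otimes> b)" using c by (simp add: m_assoc)
  also have "\<dots> = b \<otimes> a \<otimes> b" using c aa by simp
  also have "\<dots> = (b \<otimes> a \<otimes> b) \<otimes> (a \<otimes> a)" using c aa by simp
  also have "\<dots> = (b \<otimes> a \<otimes> b \<otimes> a) \<otimes> a" using c by (simp add: m_assoc)
  finally show ?thesis .
qed

lemma coset_card:
  assumes H: "subgroup H G" and t: "t \<in> carrier G" "t \<notin> H" and fin: "finite H"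
  shows "card (H \<union> (\<lambda>x. t \<otimes> x) ` H) = 2 * card H"
proof -
  have Hc: "H \<subseteq> carrier G" using H subgroup.subset by blast
  have disj: "H \<inter> (\<lambda>x. t \<otimes> x) ` H = {}"
  proof (rule ccontr)
    assume "H \<inter> (\<lambda>x. t \<otimes> x) ` H \<noteq> {}"
    then obtain x y where xy: "x \<in> H" "y \<in> H" "y = t \<otimes> x" by blast
    have xc: "x \<in> carrier G" using xy(1) Hc by blast
    have "y \<otimes> inv x = t \<otimes> (x \<otimes> inv x)" unfolding xy(3) using xc t(1) by (simp add: m_assoc)
    then have "t = y \<otimes> inv x" using xc t(1) by simp
    moreover have "y \<otimes> inv x \<in> H"
      using subgroup.m_closed[OF H xy(2) subgroup.m_inv_closed[OF H xy(1)]] .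
    ultimately show False using t(2) by simp
  qed
  have inj: "inj_on (\<lambda>x. t \<otimes> x) H"
  proof (rule inj_onI)
    fix x y assume "x \<in> H" "y \<in> H" "t \<otimes> x = t \<otimes> y"
    then show "x = y" using lcan[of t x y] Hc t(1) by blast
  qed
  show ?thesis using card_Un_disjoint[OF fin finite_imageI[OF fin] disj] card_image[OF inj] by simp
qed

end

theorem proposition5p1:
  fixes P :: "'p set" and L :: "'p set set"
    and R :: "('g, 'm) monoid_scheme" and r :: "'p \<Rightarrow> 'g"
    and a b :: 'p and A X :: "'p set"
  assumes "dense_near_hexagon P L"
    and "card P \<in> {759, 729, 891, 567, 405}"
    and "representation P L R r"
    and "\<not> comm_group R"
    and "a \<in> P" and "b \<in> P" and "gdist L a b = 3"
    and "A = {x. \<exists>l\<in>L. a \<in> l \<and> x \<in> l \<and> gdist L b x = 2}"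
    and "X \<subseteq> A"
    and "generate R (r ` X) \<inter> group_center R = {\<one>\<^bsub>R\<^esub>}"
    and "F2_independent R (r ` X)" and "card (r ` X) = card X"
  shows "card (set_mult R {\<one>\<^bsub>R\<^esub>, r b} (generate R (r ` X))) = 2 ^ (card X + 1) \<and>
         (set_mult R {\<one>\<^bsub>R\<^esub>, r b} (generate R (r ` X))) \<inter> group_center R = {\<one>\<^bsub>R\<^esub>} \<and>
         (infinite (carrier R) \<or> 2 ^ (2 * card X + 3) \<le> card (carrier R))"
proof -
  interpret nhrep P L R r by unfold_locales (rule assms(1), rule assms(3))
  interpret G: group R by (rule grp)
  note aP = assms(5) and bP = assms(6) and dab = assms(7)
  have "card P > 0" using assms(2) by auto
  then have finP: "finite P" using card_ge_0_finite by blast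
  define lam where "lam = com a b"
  have lam_all: "com p q = lam" if "p \<in> P" "q \<in> P" "d p q = 3" for p q
    unfolding lam_def using com_const[OF that aP bP dab] .
  have rP: "r ` P \<subseteq> carrier R" using r_carr by blast
  have invP: "\<forall>s\<in>r ` P. s \<otimes>\<^bsub>R\<^esub> s = \<one>\<^bsub>R\<^esub>" using r_sq by blast
  have lamc: "lam \<in> carrier R" unfolding lam_def com_def using r_carr aP bP by simp
  have lam_ne: "lam \<noteq> \<one>\<^bsub>R\<^esub>"
  proof
    assume l1: "lam = \<one>\<^bsub>R\<^esub>"
    have "\<forall>s\<in>r ` P. \<forall>t\<in>r ` P. s \<otimes>\<^bsub>R\<^esub> t = t \<otimes>\<^bsub>R\<^esub> s"
    proof (intro ballI)
      fix s t assume "s \<in> r ` P" "t \<in> r ` P"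
      then obtain p q where pq: "p \<in> P" "q \<in> P" "s = r p" "t = r q" by blast
      show "s \<otimes>\<^bsub>R\<^esub> t = t \<otimes>\<^bsub>R\<^esub> s"
      proof (cases "d p q \<le> 2")
        case True then show ?thesis using comm_le2 pq by simp
      next
        case False
        then have "d p q = 3" using d_le3 pq by fastforce
        then have "com p q = \<one>\<^bsub>R\<^esub>" using lam_all pq l1 by simp
        then show ?thesis using G.invol_comm[OF r_carr r_carr r_sq r_sq] pq unfolding com_def by simp
      qed
    qed
    then have "x \<otimes>\<^bsub>R\<^esub> y = y \<otimes>\<^bsub>R\<^esub> x" if "x \<in> carrier R" "y \<in> carrier R" for x y
      using G.gen_comm_all[OF rP] that r_gen by blast
    then have "comm_group R" using G.group_comm_groupI by blast
    then show False using assms(4) by simp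
  qed
  have lamlam: "lam \<otimes>\<^bsub>R\<^esub> lam = \<one>\<^bsub>R\<^esub>"
  proof -
    have "d b a = 3" using dab d_sym by metis
    then have "com b a = lam" using lam_all aP bP by blast
    then have "inv\<^bsub>R\<^esub> lam = lam" using com_inv[OF bP aP] unfolding lam_def by simp
    then show ?thesis using lamc G.r_inv[OF lamc] by simp
  qed
  have lam_gen: "r u \<otimes>\<^bsub>R\<^esub> lam = lam \<otimes>\<^bsub>R\<^esub> r u" if u: "u \<in> P" for u
  proof -
    obtain q where q: "q \<in> P" "d u q = 3" using all_opp u by blast
    have "d q u = 3" using q d_sym by metis
    then have "com u q = lam" "com q u = lam" using lam_all q u by auto
    then show ?thesis using G.central_step[OF r_carr[OF u] r_carr[OF q(1)] r_sq[OF u]] unfolding com_def by simp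
  qed
  have lam_cen: "\<forall>x\<in>carrier R. lam \<otimes>\<^bsub>R\<^esub> x = x \<otimes>\<^bsub>R\<^esub> lam"
  proof
    fix x assume x: "x \<in> carrier R"
    have "\<forall>s\<in>r ` P. lam \<otimes>\<^bsub>R\<^esub> s = s \<otimes>\<^bsub>R\<^esub> lam" using lam_gen by auto
    then show "lam \<otimes>\<^bsub>R\<^esub> x = x \<otimes>\<^bsub>R\<^esub> lam" using G.comm_gen[OF lamc rP] x r_gen by blast
  qed
  have acm_P: "\<forall>s\<in>r ` P. \<forall>t\<in>r ` P. \<exists>c\<in>{\<one>\<^bsub>R\<^esub>, lam}. s \<otimes>\<^bsub>R\<^esub> t = c \<otimes>\<^bsub>R\<^esub> (t \<otimes>\<^bsub>R\<^esub> s)"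
  proof (intro ballI)
    fix s t assume "s \<in> r ` P" "t \<in> r ` P"
    then obtain p q where pq: "p \<in> P" "q \<in> P" "s = r p" "t = r q" by blast
    show "\<exists>c\<in>{\<one>\<^bsub>R\<^esub>, lam}. s \<otimes>\<^bsub>R\<^esub> t = c \<otimes>\<^bsub>R\<^esub> (t \<otimes>\<^bsub>R\<^esub> s)"
    proof (cases "d p q \<le> 2")
      case True
      then have "s \<otimes>\<^bsub>R\<^esub> t = \<one>\<^bsub>R\<^esub> \<otimes>\<^bsub>R\<^esub> (t \<otimes>\<^bsub>R\<^esub> s)" using comm_le2 pq r_carr by simp
      then show ?thesis by blast
    next
      case False
      then have "d p q = 3" using d_le3 pq by fastforce
      then have "com p q = lam" using lam_all pq by simp
      then have "s \<otimes>\<^bsub>R\<^esub> t = lam \<otimes>\<^bsub>R\<^esub> (t \<otimes>\<^bsub>R\<^esub> s)"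
        using G.invol_anti[OF r_carr r_carr r_sq r_sq] pq unfolding com_def by simp
      then show ?thesis by blast
    qed
  qed
  have acm: "\<forall>g\<in>carrier R. \<forall>h\<in>carrier R. \<exists>c\<in>{\<one>\<^bsub>R\<^esub>, lam}. g \<otimes>\<^bsub>R\<^esub> h = c \<otimes>\<^bsub>R\<^esub> (h \<otimes>\<^bsub>R\<^esub> g)"
    using G.acm_gen[OF lamc lam_cen lamlam rP invP acm_P] r_gen by blast
  have Xf: "x \<in> P \<and> col a x \<and> d b x = 2" if x: "x \<in> X" for x
  proof -
    obtain l where l: "l \<in> L" "a \<in> l" "x \<in> l" "d b x = 2" using assms(8,9) x by blast
    have xP: "x \<in> P" using l line_sub by blast
    have "d b a = 3" using dab d_sym by metis
    then have "x \<noteq> a" using l(4) by auto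
    then have "col a x" using on_line_col[OF l(1) l(2) l(3)] by blast
    then show ?thesis using xP l(4) by blast
  qed
  have XP: "X \<subseteq> P" using Xf by blast
  have finX: "finite X" using finP XP finite_subset by blast
  define T where "T = r ` X"
  have TC: "T \<subseteq> carrier R" unfolding T_def using XP r_carr by blast
  have invT: "\<forall>s\<in>T. s \<otimes>\<^bsub>R\<^esub> s = \<one>\<^bsub>R\<^esub>" unfolding T_def using XP r_sq by blast
  have Tcomm: "\<forall>s\<in>T. \<forall>u\<in>T. s \<otimes>\<^bsub>R\<^esub> u = u \<otimes>\<^bsub>R\<^esub> s"
  proof (intro ballI)
    fix s u assume "s \<in> T" "u \<in> T"
    then obtain x y where xy: "x \<in> X" "y \<in> X" "s = r x" "u = r y" unfolding T_def by blast
    have f: "x \<in> P" "y \<in> P" "col a x" "col a y" using Xf xy by auto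
    have "d x y \<le> d x a + d a y" using f aP by (intro d_tri) auto
    moreover have "d x a = 1" "d a y = 1" using d_col f col_sym by auto
    ultimately have "d x y \<le> 2" by linarith
    then show "s \<otimes>\<^bsub>R\<^esub> u = u \<otimes>\<^bsub>R\<^esub> s" using comm_le2 f xy by simp
  qed
  have indT: "\<forall>s\<in>T. s \<notin> generate R (T - {s})" using assms(11) unfolding T_def F2_independent_def .
  have cardMX: "finite (generate R T) \<and> card (generate R T) = 2 ^ card X"
    using G.gen_card[OF finite_imageI[OF finX] TC[unfolded T_def] invT[unfolded T_def] Tcomm[unfolded T_def]
        indT[unfolded T_def]] assms(12) unfolding T_def by simp
  have rbT: "\<forall>s\<in>T. r b \<otimes>\<^bsub>R\<^esub> s = s \<otimes>\<^bsub>R\<^esub> r b"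
    unfolding T_def using Xf comm_le2 bP by fastforce
  have raT: "\<forall>s\<in>T. r a \<otimes>\<^bsub>R\<^esub> s = s \<otimes>\<^bsub>R\<^esub> r a"
    unfolding T_def using Xf col_comm by fastforce
  define MX where "MX = generate R T"
  have MXc: "MX \<subseteq> carrier R" unfolding MX_def using G.generate_incl[OF TC] .
  have raMX: "r a \<otimes>\<^bsub>R\<^esub> k = k \<otimes>\<^bsub>R\<^esub> r a" if "k \<in> MX" for k
    using G.comm_gen[OF r_carr[OF aP] TC raT] that unfolding MX_def by blast
  have ab_nc: "r a \<otimes>\<^bsub>R\<^esub> r b \<noteq> r b \<otimes>\<^bsub>R\<^esub> r a"
  proof
    assume "r a \<otimes>\<^bsub>R\<^esub> r b = r b \<otimes>\<^bsub>R\<^esub> r a"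
    then have "com a b = \<one>\<^bsub>R\<^esub>" using G.invol_comm2[OF r_carr[OF aP] r_carr[OF bP] r_sq[OF aP] r_sq[OF bP]]
      unfolding com_def by simp
    then show False using lam_ne unfolding lam_def by simp
  qed
  have rb_notin: "r b \<notin> MX" using raMX ab_nc by blast
  have Meq: "set_mult R {\<one>\<^bsub>R\<^esub>, r b} MX = MX \<union> (\<lambda>x. r b \<otimes>\<^bsub>R\<^esub> x) ` MX"
  proof -
    have e1: "(\<Union>k\<in>MX. {\<one>\<^bsub>R\<^esub> \<otimes>\<^bsub>R\<^esub> k}) = (\<Union>k\<in>MX. {k})"
      by (rule SUP_cong) (use MXc in auto)
    have "set_mult R {\<one>\<^bsub>R\<^esub>, r b} MX = (\<Union>k\<in>MX. {\<one>\<^bsub>R\<^esub> \<otimes>\<^bsub>R\<^esub> k}) \<union> (\<Union>k\<in>MX. {r b \<otimes>\<^bsub>R\<^esub> k})"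
      unfolding set_mult_def by simp
    also have "\<dots> = MX \<union> (\<lambda>x. r b \<otimes>\<^bsub>R\<^esub> x) ` MX" unfolding e1 by blast
    finally show ?thesis .
  qed
  have Mgen: "MX \<union> (\<lambda>x. r b \<otimes>\<^bsub>R\<^esub> x) ` MX = generate R (insert (r b) T)"
    unfolding MX_def using G.gen_insert[OF TC r_carr[OF bP] r_sq[OF bP] invT rbT] by simp
  define M where "M = set_mult R {\<one>\<^bsub>R\<^esub>, r b} MX"
  have insC: "insert (r b) T \<subseteq> carrier R" using TC r_carr bP by blast
  have Msg: "subgroup M R" unfolding M_def Meq Mgen using G.generate_is_subgroup[OF insC] .
  have cardM: "card M = 2 ^ (card X + 1)"
  proof -
    have "card M = 2 * card MX" unfolding M_def Meq
      using G.coset_card[OF G.generate_is_subgroup[OF TC] r_carr[OF bP]] rb_notin cardMX unfolding MX_def by blast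
    then show ?thesis using cardMX unfolding MX_def by simp
  qed
  have one_cen: "\<one>\<^bsub>R\<^esub> \<in> group_center R" unfolding group_center_def by simp
  have MZ: "M \<inter> group_center R = {\<one>\<^bsub>R\<^esub>}"
  proof (intro equalityI subsetI)
    fix y assume y: "y \<in> M \<inter> group_center R"
    then have yM: "y \<in> MX \<or> (\<exists>k\<in>MX. y = r b \<otimes>\<^bsub>R\<^esub> k)" unfolding M_def Meq by blast
    then show "y \<in> {\<one>\<^bsub>R\<^esub>}"
    proof
      assume "y \<in> MX"
      then show ?thesis using y assms(10) unfolding MX_def T_def by blast
    next
      assume "\<exists>k\<in>MX. y = r b \<otimes>\<^bsub>R\<^esub> k"
      then obtain k where k: "k \<in> MX" "y = r b \<otimes>\<^bsub>R\<^esub> k" by blast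
      have kc: "k \<in> carrier R" using k MXc by blast
      have ca: "r a \<in> carrier R" "r b \<in> carrier R" using r_carr aP bP by auto
      have "y \<otimes>\<^bsub>R\<^esub> r a = r a \<otimes>\<^bsub>R\<^esub> y" using y ca unfolding group_center_def by blast
      then have "r b \<otimes>\<^bsub>R\<^esub> (k \<otimes>\<^bsub>R\<^esub> r a) = (r a \<otimes>\<^bsub>R\<^esub> r b) \<otimes>\<^bsub>R\<^esub> k"
        unfolding k(2) using ca kc by (simp add: G.m_assoc)
      then have "(r b \<otimes>\<^bsub>R\<^esub> r a) \<otimes>\<^bsub>R\<^esub> k = (r a \<otimes>\<^bsub>R\<^esub> r b) \<otimes>\<^bsub>R\<^esub> k"
        using raMX[OF k(1)] ca kc by (simp add: G.m_assoc)
      then have "r b \<otimes>\<^bsub>R\<^esub> r a = r a \<otimes>\<^bsub>R\<^esub> r b" using ca kc by (simp add: G.right_cancel)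
      then show ?thesis using ab_nc by simp
    qed
  next
    fix y assume "y \<in> {\<one>\<^bsub>R\<^esub>}"
    then show "y \<in> M \<inter> group_center R" using subgroup.one_closed[OF Msg] one_cen by simp
  qed
  have third: "infinite (carrier R) \<or> 2 ^ (2 * card X + 3) \<le> card (carrier R)"
  proof (cases "finite (carrier R)")
    case False then show ?thesis by simp
  next
    case True
    have Mab: "\<forall>m\<in>M. \<forall>n\<in>M. m \<otimes>\<^bsub>R\<^esub> n = n \<otimes>\<^bsub>R\<^esub> m"
    proof (intro ballI)
      fix m n assume "m \<in> M" "n \<in> M"
      moreover have "\<forall>s\<in>insert (r b) T. \<forall>t\<in>insert (r b) T. s \<otimes>\<^bsub>R\<^esub> t = t \<otimes>\<^bsub>R\<^esub> s"
        using Tcomm rbT by fastforce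
      ultimately show "m \<otimes>\<^bsub>R\<^esub> n = n \<otimes>\<^bsub>R\<^esub> m"
        using G.gen_comm_all[OF insC] unfolding M_def Meq Mgen by blast
    qed
    have MZ': "\<forall>m\<in>M. m \<noteq> \<one>\<^bsub>R\<^esub> \<longrightarrow> (\<exists>g\<in>carrier R. g \<otimes>\<^bsub>R\<^esub> m \<noteq> m \<otimes>\<^bsub>R\<^esub> g)"
    proof (intro ballI impI)
      fix m assume m: "m \<in> M" "m \<noteq> \<one>\<^bsub>R\<^esub>"
      have mc: "m \<in> carrier R" using m subgroup.subset[OF Msg] by blast
      have "m \<notin> group_center R" using MZ m by blast
      then obtain g where "g \<in> carrier R" "m \<otimes>\<^bsub>R\<^esub> g \<noteq> g \<otimes>\<^bsub>R\<^esub> m" using mc unfolding group_center_def by blast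
      then show "\<exists>g\<in>carrier R. g \<otimes>\<^bsub>R\<^esub> m \<noteq> m \<otimes>\<^bsub>R\<^esub> g" by metis
    qed
    have lamM: "lam \<notin> M"
    proof
      assume "lam \<in> M"
      moreover have "lam \<in> group_center R" unfolding group_center_def using lamc lam_cen by blast
      ultimately show False using MZ lam_ne by blast
    qed
    have "2 * card M * card M \<le> card (carrier R)"
      using G.count_bound[OF True Msg Mab MZ' lamc lam_cen lamlam lam_ne lamM acm] .
    moreover have "(2::nat) ^ (2 * card X + 3) = 2 * 2 ^ (card X + 1) * 2 ^ (card X + 1)"
    proof -
      have e: "2 * card X + 3 = Suc ((card X + 1) + (card X + 1))" by simp
      show ?thesis unfolding e power_Suc power_add by (simp add: mult.assoc)
    qed
    ultimately show ?thesis using cardM by simp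
  qed
  show ?thesis using cardM MZ third unfolding M_def MX_def T_def by blast
qed

end
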